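(* Let $\mathcal{F}$ be a regular one-dimensional foliation of $\mathbb{T}^2$, let $A\in H_1(\mathbb{T}^2,\mathbb{Z})$ be a class not represented by closed leaves of $\mathcal{F}$, and let $\gamma$ be a minimal contact curve for $A$. Then for every tangency point $t_0$ of $\gamma$ with $\mathcal{F}$, the leaf of $\mathcal{F}$ through $t_0$ does not cross $\gamma$ at $t_0$.
   Context: A minimal contact curve for $A$ is an embedded smooth loop $\gamma:S^1\to\mathbb{T}^2$ representing $A$ whose number of tangency points with $\mathcal{F}$ (points where $\gamma'$ is tangent to $\mathcal{F}$) is finite and minimal among all embedded smooth loops representing $A$. *)

theory Defs
  imports "HOL-Analysis.Analysis"
begin

text \<open>The torus T^2 is R^2 / Z^2; everything is lifted to the universal cover R^2.\<close>

definition Z2 :: "(real^2) set" where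
  "Z2 = {v. \<forall>i. v $ i \<in> \<int>}"

text \<open>C-infinity smoothness on an open set U of R^2: all iterated partial derivatives exist.
  P is indexes the iterated partial derivatives (True = d/dx1, False = d/dx2).\<close>
definition smooth_on :: "(real^2) set \<Rightarrow> (real^2 \<Rightarrow> 'b::real_normed_vector) \<Rightarrow> bool" where
  "smooth_on U f \<longleftrightarrow> (\<exists>P :: bool list \<Rightarrow> real^2 \<Rightarrow> 'b.
      (\<forall>x\<in>U. P [] x = f x) \<and>
      (\<forall>is. \<forall>x\<in>U. (P is has_derivative
          (\<lambda>h. (h $ 1) *\<^sub>R P (True # is) x + (h $ 2) *\<^sub>R P (False # is) x)) (at x)))"

definition smooth_curve :: "(real \<Rightarrow> real^2) \<Rightarrow> bool" where
  "smooth_curve g \<longleftrightarrow> (\<exists>D :: nat \<Rightarrow> real \<Rightarrow> real^2. D 0 = g \<and>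
      (\<forall>n t. (D n has_vector_derivative D (Suc n) t) (at t)))"

text \<open>A regular (smooth, nonsingular) one-dimensional foliation of T^2, given by its tangent
  line field L (the Z^2-periodic lift to R^2): locally spanned by a smooth nonvanishing vector
  field.  In dimension one, foliations are exactly the smooth line fields.\<close>
definition foliation_T2 :: "(real^2 \<Rightarrow> (real^2) set) \<Rightarrow> bool" where
  "foliation_T2 L \<longleftrightarrow> (\<forall>x. \<forall>k\<in>Z2. L (x + k) = L x) \<and>
     (\<forall>x. \<exists>U (v :: real^2 \<Rightarrow> real^2). open U \<and> x \<in> U \<and> smooth_on U v \<and>
        (\<forall>y\<in>U. v y \<noteq> 0 \<and> L y = span {v y}))"

text \<open>Lift g of a smooth embedded loop in T^2 representing the class A \<in> H_1(T^2,Z) = Z^2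
  (parametrised by R / Z).\<close>
definition embedded_loop :: "real^2 \<Rightarrow> (real \<Rightarrow> real^2) \<Rightarrow> bool" where
  "embedded_loop A g \<longleftrightarrow> smooth_curve g \<and> (\<forall>t. g (t + 1) = g t + A) \<and>
     (\<forall>t. vector_derivative g (at t) \<noteq> 0) \<and>
     (\<forall>s t. g s - g t \<in> Z2 \<longrightarrow> s - t \<in> \<int>)"

definition tangencies :: "(real^2 \<Rightarrow> (real^2) set) \<Rightarrow> (real \<Rightarrow> real^2) \<Rightarrow> real set" where
  "tangencies L g = {t \<in> {0..<1}. vector_derivative g (at t) \<in> L (g t)}"

text \<open>A is represented by a closed leaf: some embedded loop in class A is everywhere tangent
  to the foliation (such a loop is exactly a compact leaf).\<close>
definition closed_leaf_class :: "(real^2 \<Rightarrow> (real^2) set) \<Rightarrow> real^2 \<Rightarrow> bool" where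
  "closed_leaf_class L A \<longleftrightarrow> (\<exists>c. embedded_loop A c \<and>
      (\<forall>t. vector_derivative c (at t) \<in> L (c t)))"

definition minimal_contact_curve ::
    "(real^2 \<Rightarrow> (real^2) set) \<Rightarrow> real^2 \<Rightarrow> (real \<Rightarrow> real^2) \<Rightarrow> bool" where
  "minimal_contact_curve L A g \<longleftrightarrow> embedded_loop A g \<and> finite (tangencies L g) \<and>
     (\<forall>g'. embedded_loop A g' \<and> finite (tangencies L g') \<longrightarrow>
        card (tangencies L g) \<le> card (tangencies L g'))"

text \<open>Local first integral near p: a smooth submersion f on a neighbourhood U of p, vanishing
  at p, whose level sets are the plaques (ker df = L).  Its zero set is the local leaf through p.\<close>
definition local_first_integral ::
    "(real^2 \<Rightarrow> (real^2) set) \<Rightarrow> real^2 \<Rightarrow> (real^2) set \<Rightarrow> (real^2 \<Rightarrow> real) \<Rightarrow> bool" where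
  "local_first_integral L p U f \<longleftrightarrow> open U \<and> p \<in> U \<and> smooth_on U f \<and> f p = 0 \<and>
     (\<forall>y\<in>U. \<exists>f'. (f has_derivative f') (at y) \<and> f' \<noteq> (\<lambda>h. 0) \<and> L y = {h. f' h = 0})"

text \<open>The leaf through g t0 crosses g at t0: g passes from one side of the local leaf to the
  other, i.e. arbitrarily close to t0 there are parameters on both sides.\<close>
definition leaf_crosses :: "(real^2 \<Rightarrow> (real^2) set) \<Rightarrow> (real \<Rightarrow> real^2) \<Rightarrow> real \<Rightarrow> bool" where
  "leaf_crosses L g t0 \<longleftrightarrow> (\<exists>U f. local_first_integral L (g t0) U f \<and>
     (\<forall>\<delta>>0. \<exists>s1\<in>ball t0 \<delta>. \<exists>s2\<in>ball t0 \<delta>. g s1 \<in> U \<and> g s2 \<in> U \<and>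
        f (g s1) < 0 \<and> 0 < f (g s2)))"

end

theory Submission
  imports Defs "HOL-Computational_Algebra.Polynomial"
begin


definition C_inf :: "(real \<Rightarrow> real) \<Rightarrow> bool" where
  "C_inf f \<longleftrightarrow> (\<exists>D. D 0 = f \<and> (\<forall>n t. (D n has_real_derivative D (Suc n) t) (at t)))"

lemma C_inf_coinduct:
  assumes "Q f"
    and step: "\<And>g. Q g \<Longrightarrow> \<exists>g'. (\<forall>t. (g has_real_derivative g' t) (at t)) \<and> Q g'"
  shows "C_inf f"
proof -
  define nx where "nx g = (SOME g'. (\<forall>t. (g has_real_derivative g' t) (at t)) \<and> Q g')" for g
  have nx: "(\<forall>t. (g has_real_derivative nx g t) (at t)) \<and> Q (nx g)" if "Q g" for g
    unfolding nx_def using someI_ex[OF step[OF that]] by blast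
  define D where "D n = (nx ^^ n) f" for n
  have QD: "Q (D n)" for n by (induction n) (auto simp: D_def assms(1) nx)
  have "(D n has_real_derivative D (Suc n) t) (at t)" for n t
    using nx[OF QD[of n]] by (simp add: D_def)
  then show ?thesis unfolding C_inf_def by (intro exI[of _ D]) (simp add: D_def)
qed

lemma C_inf_deriv:
  assumes "C_inf f"
  shows "\<exists>f'. (\<forall>t. (f has_real_derivative f' t) (at t)) \<and> C_inf f'"
proof -
  obtain D where D: "D 0 = f" "\<And>n t. (D n has_real_derivative D (Suc n) t) (at t)"
    using assms unfolding C_inf_def by blast
  show ?thesis
    apply (rule exI[of _ "D 1"])
    using D unfolding C_inf_def by (auto intro!: exI[of _ "\<lambda>n. D (Suc n)"])
qed

lemma C_inf_sum_prod:
  fixes xs :: "((real \<Rightarrow> real) \<times> (real \<Rightarrow> real)) list"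
  assumes "\<forall>p\<in>set xs. C_inf (fst p) \<and> C_inf (snd p)"
  shows "\<exists>ys. (\<forall>p\<in>set ys. C_inf (fst p) \<and> C_inf (snd p)) \<and>
     (\<forall>t. ((\<lambda>t. \<Sum>p\<leftarrow>xs. fst p t * snd p t) has_real_derivative (\<Sum>p\<leftarrow>ys. fst p t * snd p t)) (at t))"
  using assms
proof (induction xs)
  case Nil
  then show ?case by (auto intro!: exI[of _ "[]"])
next
  case (Cons p xs)
  then obtain ys where ys: "\<forall>p\<in>set ys. C_inf (fst p) \<and> C_inf (snd p)"
     "\<forall>t. ((\<lambda>t. \<Sum>p\<leftarrow>xs. fst p t * snd p t) has_real_derivative (\<Sum>p\<leftarrow>ys. fst p t * snd p t)) (at t)"
    by auto
  obtain f' where f': "\<forall>t. (fst p has_real_derivative f' t) (at t)" "C_inf f'"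
    using C_inf_deriv[of "fst p"] Cons.prems by auto
  obtain g' where g': "\<forall>t. (snd p has_real_derivative g' t) (at t)" "C_inf g'"
    using C_inf_deriv[of "snd p"] Cons.prems by auto
  show ?case
  proof (intro exI[of _ "(f', snd p) # (fst p, g') # ys"] conjI allI)
    show "\<forall>q\<in>set ((f', snd p) # (fst p, g') # ys). C_inf (fst q) \<and> C_inf (snd q)"
      using ys f' g' Cons.prems by auto
    fix t
    have "((\<lambda>t. fst p t * snd p t + (\<Sum>p\<leftarrow>xs. fst p t * snd p t)) has_real_derivative
        (f' t * snd p t + fst p t * g' t + (\<Sum>p\<leftarrow>ys. fst p t * snd p t))) (at t)"
      using f'(1) g'(1) ys(2)
      by (auto intro!: derivative_eq_intros simp: algebra_simps)
    then show "((\<lambda>t. \<Sum>p\<leftarrow>p # xs. fst p t * snd p t) has_real_derivative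
         (\<Sum>p\<leftarrow>(f', snd p) # (fst p, g') # ys. fst p t * snd p t)) (at t)"
      by (simp add: algebra_simps)
  qed
qed

lemma C_inf_mult:
  assumes "C_inf f" "C_inf g"
  shows "C_inf (\<lambda>t. f t * g t)"
proof -
  let ?Q = "\<lambda>h. \<exists>xs :: ((real \<Rightarrow> real) \<times> (real \<Rightarrow> real)) list.
      (\<forall>p\<in>set xs. C_inf (fst p) \<and> C_inf (snd p)) \<and> h = (\<lambda>t. \<Sum>p\<leftarrow>xs. fst p t * snd p t)"
  show ?thesis
  proof (rule C_inf_coinduct[where Q = ?Q])
    show "?Q (\<lambda>t. f t * g t)" using assms by (intro exI[of _ "[(f,g)]"]) auto
  next
    fix h assume "?Q h"
    then obtain xs where xs: "\<forall>p\<in>set xs. C_inf (fst p) \<and> C_inf (snd p)"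
      "h = (\<lambda>t. \<Sum>p\<leftarrow>xs. fst p t * snd p t)" by blast
    from C_inf_sum_prod[OF xs(1)] obtain ys where "\<forall>p\<in>set ys. C_inf (fst p) \<and> C_inf (snd p)"
     "\<forall>t. ((\<lambda>t. \<Sum>p\<leftarrow>xs. fst p t * snd p t) has_real_derivative (\<Sum>p\<leftarrow>ys. fst p t * snd p t)) (at t)"
      by blast
    then show "\<exists>g'. (\<forall>t. (h has_real_derivative g' t) (at t)) \<and> ?Q g'"
      using xs(2) by (intro exI[of _ "\<lambda>t. \<Sum>p\<leftarrow>ys. fst p t * snd p t"]) auto
  qed
qed

lemma C_inf_affine:
  assumes "C_inf f"
  shows "C_inf (\<lambda>x. f (a * x + c))"
proof -
  obtain D where D: "D 0 = f" "\<And>n t. (D n has_real_derivative D (Suc n) t) (at t)"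
    using assms unfolding C_inf_def by blast
  have "((\<lambda>x. a ^ n * D n (a * x + c)) has_real_derivative a ^ Suc n * D (Suc n) (a * x + c)) (at x)" for n x
    using DERIV_chain2[OF D(2), of "\<lambda>x. a * x + c" a x]
    by (auto intro!: derivative_eq_intros DERIV_chain2[OF D(2)] simp: algebra_simps)
  then show ?thesis unfolding C_inf_def using D(1)
    by (intro exI[of _ "\<lambda>n x. a ^ n * D n (a * x + c)"]) auto
qed

lemma C_inf_exp: "C_inf (\<lambda>x. exp (K * x))"
  unfolding C_inf_def
  by (rule exI[of _ "\<lambda>n x. K ^ n * exp (K * x)"]) (auto intro!: derivative_eq_intros)



lemma poly_exp_tendsto: "((\<lambda>y::real. y * poly p y / exp y) \<longlongrightarrow> 0) at_top"
proof -
  have "((\<lambda>y::real. \<Sum>i\<le>degree p. coeff p i * (y ^ Suc i / exp y)) \<longlongrightarrow> (\<Sum>i\<le>degree p. coeff p i * 0)) at_top"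
    by (intro tendsto_intros tendsto_power_div_exp_0)
  moreover have "(\<Sum>i\<le>degree p. coeff p i * (y ^ Suc i / exp y)) = y * poly p y / exp y" for y
    by (simp add: poly_altdef sum_distrib_left sum_divide_distrib algebra_simps)
  ultimately show ?thesis by simp
qed

fun pp :: "nat \<Rightarrow> real poly" where
  "pp 0 = 1"
| "pp (Suc n) = [:0,0,1:] * (pp n - pderiv (pp n))"

definition Dh :: "nat \<Rightarrow> real \<Rightarrow> real" where
  "Dh n x = (if x > 0 then poly (pp n) (1/x) * exp (-1/x) else 0)"

lemma Dh_deriv: "(Dh n has_real_derivative Dh (Suc n) x) (at x)"
proof (cases "x > 0")
  case True
  have "((\<lambda>x. poly (pp n) (1/x) * exp (-1/x)) has_real_derivative
        (poly (pderiv (pp n)) (1/x) * (- 1 / x^2) * exp (-1/x) + poly (pp n) (1/x) * (exp (-1/x) * (1/x^2)))) (at x)"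
    using True
    by (auto intro!: derivative_eq_intros DERIV_chain2[OF poly_DERIV] simp: power2_eq_square field_simps)
  moreover have "poly (pderiv (pp n)) (1/x) * (- 1 / x^2) * exp (-1/x) + poly (pp n) (1/x) * (exp (-1/x) * (1/x^2))
      = Dh (Suc n) x"
    using True by (simp add: Dh_def algebra_simps power2_eq_square)
  ultimately have d: "((\<lambda>x. poly (pp n) (1/x) * exp (-1/x)) has_real_derivative Dh (Suc n) x) (at x)" by simp
  show ?thesis
    by (rule has_field_derivative_transform_within_open[OF d, of "{0<..}"]) (use True in \<open>auto simp: Dh_def\<close>)
next
  case False
  show ?thesis
  proof (cases "x < 0")
    case True
    have "((\<lambda>x. 0) has_real_derivative 0) (at x)" by simp
    then have "(Dh n has_real_derivative 0) (at x)"
      by (rule has_field_derivative_transform_within_open[of _ _ _ "{..<0}"]) (use True in \<open>auto simp: Dh_def\<close>)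
    then show ?thesis using True by (simp add: Dh_def)
  next
    case False
    with \<open>\<not> x > 0\<close> have x0: "x = 0" by simp
    have "((\<lambda>t. (Dh n t - Dh n 0) / (t - 0)) \<longlongrightarrow> 0) (at 0)"
    proof (rule filterlim_split_at)
      have "((\<lambda>t. 0::real) \<longlongrightarrow> 0) (at_left 0)" by simp
      then show "((\<lambda>t. (Dh n t - Dh n 0) / (t - 0)) \<longlongrightarrow> 0) (at_left 0)"
        by (rule Lim_transform_eventually) (auto simp: eventually_at_left_field Dh_def intro!: exI[of _ "-1"])
    next
      have "((\<lambda>t. (\<lambda>y. y * poly (pp n) y / exp y) (inverse t)) \<longlongrightarrow> 0) (at_right 0)"
        by (rule filterlim_compose[OF poly_exp_tendsto filterlim_inverse_at_top_right])
      then show "((\<lambda>t. (Dh n t - Dh n 0) / (t - 0)) \<longlongrightarrow> 0) (at_right 0)"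
        by (rule Lim_transform_eventually)
          (auto simp: eventually_at_right_field Dh_def exp_minus field_simps intro!: exI[of _ 1])
    qed
    then have "(Dh n has_real_derivative 0) (at 0)"
      by (simp add: has_field_derivative_iff)
    then show ?thesis using x0 by (simp add: Dh_def)
  qed
qed

lemma C_inf_Dh0: "C_inf (Dh 0)"
  unfolding C_inf_def using Dh_deriv by blast

lemma Dh0: "Dh 0 x = (if x > 0 then exp (-1/x) else 0)"
  by (simp add: Dh_def)

lemma Dh1: "Dh 1 x = (if x > 0 then exp (-1/x) / x^2 else 0)"
  by (simp add: Dh_def power2_eq_square field_simps)



lemma derivs_vanish:
  assumes D: "\<And>n t. (D n has_real_derivative D (Suc n) t) (at t)"
    and S: "open S" and z: "\<And>x. x \<in> S \<Longrightarrow> D 0 x = 0"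
  shows "x \<in> S \<Longrightarrow> D n x = 0"
proof (induction n arbitrary: x)
  case 0 then show ?case using z by simp
next
  case (Suc n)
  have "((\<lambda>x. 0) has_real_derivative 0) (at x)" by simp
  then have "(D n has_real_derivative 0) (at x)"
    by (rule has_field_derivative_transform_within_open[OF _ S Suc.prems]) (use Suc.IH in auto)
  then show ?case using DERIV_unique[OF D[of n x]] by simp
qed

lemma bump_exists:
  fixes \<delta> \<kappa> :: real
  assumes d: "0 < \<delta>"
  shows "\<exists>Db. (\<forall>n t. (Db n has_real_derivative Db (Suc n) t) (at t)) \<and>
     (\<forall>n x. \<delta> < \<bar>x\<bar> \<longrightarrow> Db n x = 0) \<and> (\<forall>x. 0 \<le> Db 0 x) \<and>
     (\<forall>x. \<delta> \<le> \<bar>x\<bar> \<longrightarrow> Db 0 x = 0 \<and> Db 1 x = 0) \<and>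
     (\<forall>x. -\<delta> < x \<and> x \<le> \<delta>/2 \<longrightarrow> 0 < Db 0 x \<and> \<kappa> * Db 0 x \<le> Db 1 x) \<and>
     (\<exists>B. \<forall>x. \<bar>Db 0 x\<bar> \<le> B \<and> \<bar>Db 1 x\<bar> \<le> B)"
proof -
  define K where "K = \<kappa> + 4 / \<delta>^2"
  define b where "b x = exp (K * x) * Dh 0 (1 * x + \<delta>) * Dh 0 ((-1) * x + \<delta>)" for x
  define bd where "bd x = K * b x + exp (K * x) * (Dh 1 (x + \<delta>) * Dh 0 (\<delta> - x) - Dh 0 (x + \<delta>) * Dh 1 (\<delta> - x))" for x
  have Cb: "C_inf b" unfolding b_def
    by (intro C_inf_mult C_inf_exp C_inf_affine C_inf_Dh0)
  then obtain Db where Db: "Db 0 = b" "\<And>n t. (Db n has_real_derivative Db (Suc n) t) (at t)"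
    unfolding C_inf_def by blast
  have bder: "(b has_real_derivative bd x) (at x)" for x
    unfolding b_def bd_def
    by (auto intro!: derivative_eq_intros DERIV_chain2[OF Dh_deriv] simp: algebra_simps)
  have Db1: "Db 1 x = bd x" for x
    using DERIV_unique[OF Db(2)[of 0 x]] bder[of x] Db(1) by simp
  have bdc: "continuous_on UNIV bd"
  proof -
    have c0: "continuous_on UNIV (Dh n)" for n
      using Dh_deriv by (meson DERIV_isCont continuous_at_imp_continuous_on)
    have "continuous_on UNIV b" using bder by (meson DERIV_isCont continuous_at_imp_continuous_on)
    then show ?thesis unfolding bd_def
      by (intro continuous_intros continuous_on_compose2[OF c0]) auto
  qed
  have bc: "continuous_on UNIV b" using bder by (meson DERIV_isCont continuous_at_imp_continuous_on)
  have zero: "b x = 0 \<and> bd x = 0" if "\<delta> \<le> \<bar>x\<bar>" for x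
    using that by (auto simp: b_def bd_def Dh_def)
  have vanish: "Db n x = 0" if "\<delta> < \<bar>x\<bar>" for n x
    by (rule derivs_vanish[of Db "{x. \<delta> < \<bar>x\<bar>}", OF Db(2)])
       (use that zero Db(1) in \<open>auto intro!: open_Collect_less continuous_intros\<close>)
  have pos: "0 < b x \<and> \<kappa> * b x \<le> bd x" if "-\<delta> < x" "x \<le> \<delta>/2" for x
  proof -
    have xp: "0 < x + \<delta>" "0 < \<delta> - x" using that d by auto
    have bpos: "0 < b x" using xp by (simp add: b_def Dh_def)
    have bdx: "bd x = b x * (K + 1/(x+\<delta>)^2 - 1/(\<delta>-x)^2)"
    proof -
      have e1: "Dh 1 (x+\<delta>) = Dh 0 (x+\<delta>) / (x+\<delta>)^2" "Dh 1 (\<delta>-x) = Dh 0 (\<delta>-x) / (\<delta>-x)^2"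
        using xp by (simp_all only: Dh0 Dh1) auto
      show ?thesis unfolding bd_def e1 b_def using xp by (simp add: field_simps)
    qed
    moreover have "1/(\<delta>-x)^2 \<le> 4/\<delta>^2"
    proof -
      have "\<delta>/2 \<le> \<delta> - x" using that by simp
      then have "(\<delta>/2)^2 \<le> (\<delta>-x)^2" using d by (intro power_mono) auto
      then have "1/(\<delta>-x)^2 \<le> 1/(\<delta>/2)^2" using d xp by (intro divide_left_mono) auto
      then show ?thesis by (simp add: power2_eq_square field_simps)
    qed
    moreover have "0 \<le> 1/(x+\<delta>)^2" by simp
    ultimately have "\<kappa> \<le> K + 1/(x+\<delta>)^2 - 1/(\<delta>-x)^2" unfolding K_def by linarith
    then have "b x * \<kappa> \<le> b x * (K + 1/(x+\<delta>)^2 - 1/(\<delta>-x)^2)" using bpos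
      by (intro mult_left_mono) auto
    then show ?thesis using bpos bdx by (simp add: mult.commute)
  qed
  have nonneg: "0 \<le> b x" for x by (simp add: b_def Dh_def)
  have bnd: "\<exists>B. \<forall>x. \<bar>b x\<bar> \<le> B \<and> \<bar>bd x\<bar> \<le> B"
  proof -
    have "compact ((\<lambda>x. \<bar>b x\<bar> + \<bar>bd x\<bar>) ` {-\<delta>..\<delta>})"
      by (intro compact_continuous_image continuous_intros continuous_on_subset[OF bc] continuous_on_subset[OF bdc]) auto
    then obtain B where B: "\<forall>y\<in>(\<lambda>x. \<bar>b x\<bar> + \<bar>bd x\<bar>) ` {-\<delta>..\<delta>}. norm y \<le> B"
      using compact_imp_bounded bounded_iff by metis
    have "\<bar>b x\<bar> \<le> B \<and> \<bar>bd x\<bar> \<le> B" for x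
    proof (cases "\<delta> \<le> \<bar>x\<bar>")
      case True then show ?thesis using zero[of x] B d by force
    next
      case False then have "x \<in> {-\<delta>..\<delta>}" by auto
      then have "\<bar>\<bar>b x\<bar> + \<bar>bd x\<bar>\<bar> \<le> B" using B by auto
      then show ?thesis by linarith
    qed
    then show ?thesis by blast
  qed
  show ?thesis
    apply (rule exI[of _ Db])
    using Db vanish nonneg zero pos bnd Db1 by auto
qed



lemma Z2_add: "a \<in> Z2 \<Longrightarrow> b \<in> Z2 \<Longrightarrow> a + b \<in> Z2" by (auto simp: Z2_def)
lemma Z2_diff: "a \<in> Z2 \<Longrightarrow> b \<in> Z2 \<Longrightarrow> a - b \<in> Z2" by (auto simp: Z2_def)
lemma Z2_uminus: "a \<in> Z2 \<Longrightarrow> - a \<in> Z2" by (auto simp: Z2_def)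
lemma Z2_int_scale: "a \<in> Z2 \<Longrightarrow> of_int k *\<^sub>R a \<in> Z2" by (auto simp: Z2_def)
lemma Z2_small: assumes "a \<in> Z2" "norm a < 1" shows "a = 0"
proof -
  have "a $ i = 0" for i
  proof -
    have "\<bar>a $ i\<bar> < 1" using component_le_norm_cart[of a i] assms(2) by linarith
    moreover obtain z where "a $ i = of_int z" using assms(1) unfolding Z2_def by (auto elim: Ints_cases)
    ultimately show ?thesis by simp
  qed
  then show ?thesis by (simp add: vec_eq_iff)
qed
lemma closed_Z2: "closed Z2"
proof -
  have "Z2 = (\<Inter>i. (\<lambda>v. v $ i) -` \<int>)" by (auto simp: Z2_def)
  moreover have "closed ((\<lambda>v::real^2. v $ i) -` \<int>)" for i
    by (intro closed_vimage closed_Ints continuous_intros)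
  ultimately show ?thesis by (metis closed_INT)
qed
lemma zero_Z2: "0 \<in> Z2" by (simp add: Z2_def)

lemma shift_int:
  fixes g :: "real \<Rightarrow> 'a::real_vector"
  assumes "\<forall>t. g (t + 1) = g t + A"
  shows "g (t + of_int k) = g t + of_int k *\<^sub>R A"
proof -
  have n: "g (t + of_nat n) = g t + of_nat n *\<^sub>R A" for t n
  proof (induction n arbitrary: t)
    case 0 then show ?case by (simp add: assms)
  next
    case (Suc n)
    have "g (t + of_nat (Suc n)) = g ((t + of_nat n) + 1)" by (simp add: algebra_simps)
    also have "\<dots> = g t + of_nat n *\<^sub>R A + A" using assms Suc by simp
    finally show ?case by (simp add: algebra_simps)
  qed
  show ?thesis
  proof (cases k rule: int_cases)
    case (nonneg n) then show ?thesis using n by simp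
  next
    case (neg n)
    have kk: "(of_int k :: real) = - of_nat (Suc n)" using neg by simp
    have "g (t - of_nat (Suc n) + of_nat (Suc n)) = g (t - of_nat (Suc n)) + of_nat (Suc n) *\<^sub>R A" by (rule n)
    then have "g t = g (t - of_nat (Suc n)) + of_nat (Suc n) *\<^sub>R A" by simp
    then show ?thesis unfolding kk by (simp add: algebra_simps)
  qed
qed

lemma deriv_shift:
  fixes g :: "real \<Rightarrow> 'a::real_normed_vector"
  assumes "\<forall>t. g (t + 1) = g t + A" "\<And>t. (g has_vector_derivative D1 t) (at t)"
  shows "D1 (t + of_int k) = D1 t"
proof -
  have sh: "((\<lambda>s. s + of_int k) has_vector_derivative 1) (at t)"
    by (auto intro!: derivative_eq_intros)
  have "((\<lambda>s. g (s + of_int k)) has_vector_derivative D1 (t + of_int k)) (at t)"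
    using vector_diff_chain_at[OF sh assms(2)[of "t + of_int k"]] by (simp add: o_def)
  moreover have "(\<lambda>s. g (s + of_int k)) = (\<lambda>s. g s + of_int k *\<^sub>R A)"
    using shift_int[OF assms(1)] by auto
  moreover have "((\<lambda>s. g s + of_int k *\<^sub>R A) has_vector_derivative D1 t) (at t)"
    using assms(2) by (auto intro!: derivative_eq_intros)
  ultimately show ?thesis using vector_derivative_unique_at by metis
qed

lemma periodic_bump:
  fixes \<delta> t0 :: real
  assumes Db: "\<And>n t. (Db n has_real_derivative Db (Suc n) t) (at t)"
    and van: "\<forall>n x. \<delta> < \<bar>x\<bar> \<longrightarrow> Db n x = 0" and d: "0 < \<delta>" "\<delta> < 1/2"
  defines "Dp \<equiv> \<lambda>n s. Db n (frac (s - t0 + 1/2) - 1/2)"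
  shows "\<And>n s k. \<bar>s - t0 - of_int k\<bar> < 1 - \<delta> \<Longrightarrow> Dp n s = Db n (s - t0 - of_int k)"
    and "\<And>n s. (Dp n has_real_derivative Dp (Suc n) s) (at s)"
    and "\<And>n s. Dp n (s + 1) = Dp n s"
proof -
  show loc: "Dp n s = Db n (s - t0 - of_int k)" if "\<bar>s - t0 - of_int k\<bar> < 1 - \<delta>" for n s k
  proof -
    define k' where "k' = \<lfloor>s - t0 + 1/2\<rfloor>"
    have fr: "frac (s - t0 + 1/2) - 1/2 = s - t0 - of_int k'"
      by (simp add: frac_def k'_def)
    have b1: "\<bar>s - t0 - of_int k'\<bar> \<le> 1/2"
      using frac_lt_1[of "s - t0 + 1/2"] frac_ge_0[of "s - t0 + 1/2"] fr by linarith
    show ?thesis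
    proof (cases "k' = k")
      case True then show ?thesis by (simp add: Dp_def fr)
    next
      case False
      then have i1: "1 \<le> \<bar>k' - k\<bar>" by (cases "k' < k") auto
      have "(1::real) \<le> of_int \<bar>k' - k\<bar>" using i1 by (simp only: of_int_1_le_iff)
      then have "\<bar>of_int k' - of_int k\<bar> \<ge> (1::real)" by simp
      then have "\<delta> < \<bar>s - t0 - of_int k'\<bar>" "\<delta> < \<bar>s - t0 - of_int k\<bar>" using that b1 d by linarith+
      then show ?thesis using van by (simp add: Dp_def fr)
    qed
  qed
  show "(Dp n has_real_derivative Dp (Suc n) s) (at s)" for n s
  proof -
    define k where "k = \<lfloor>s - t0 + 1/2\<rfloor>"
    have f1: "s - t0 + 1/2 - of_int k < 1" "0 \<le> s - t0 + 1/2 - of_int k"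
      using frac_lt_1[of "s - t0 + 1/2"] frac_ge_0[of "s - t0 + 1/2"] by (simp_all add: frac_def k_def)
    have b: "\<bar>s - t0 - of_int k\<bar> \<le> 1/2"
      unfolding abs_le_iff using f1 by linarith
    have d0: "((\<lambda>s. s - t0 - of_int k) has_real_derivative 1) (at s)"
      by (auto intro!: derivative_eq_intros)
    have "((\<lambda>s. Db n (s - t0 - of_int k)) has_real_derivative Db (Suc n) (s - t0 - of_int k)) (at s)"
      using DERIV_chain2[OF _ d0, OF Db] by simp
    then have "(Dp n has_real_derivative Db (Suc n) (s - t0 - of_int k)) (at s)"
    proof (rule has_field_derivative_transform_within_open[of _ _ _ "ball s (1/2 - \<delta>)"])
      show "open (ball s (1/2 - \<delta>))" by simp
      show "s \<in> ball s (1/2 - \<delta>)" using d by simp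
      fix x assume "x \<in> ball s (1/2 - \<delta>)"
      then have "\<bar>x - s\<bar> < 1/2 - \<delta>" by (auto simp: dist_real_def)
      then have "\<bar>x - t0 - of_int k\<bar> < 1 - \<delta>" using b by linarith
      then show "Db n (x - t0 - of_int k) = Dp n x" using loc by simp
    qed
    then show ?thesis using loc[of s k "Suc n"] b d by simp
  qed
  show "Dp n (s + 1) = Dp n s" for n s
  proof -
    have "frac (s + 1 - t0 + 1/2) = frac (s - t0 + 1/2)"
      using frac_1_eq[of "s - t0 + 1/2"] by (simp add: algebra_simps)
    then show ?thesis by (simp add: Dp_def)
  qed
qed



definition dG :: "(real^2 \<Rightarrow> real) \<Rightarrow> (real^2 \<Rightarrow> real) \<Rightarrow> real^2 \<Rightarrow> real^2 \<Rightarrow> real" where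
  "dG g1 g2 y v = v$1 * g1 y + v$2 * g2 y"

lemma dG_add: "dG g1 g2 y (v + a *\<^sub>R u) = dG g1 g2 y v + a * dG g1 g2 y u"
  by (simp add: dG_def algebra_simps)

lemma dG_lip:
  assumes "\<bar>g1 y - g1 y'\<bar> \<le> \<Lambda> * d" "\<bar>g2 y - g2 y'\<bar> \<le> \<Lambda> * d"
  shows "\<bar>dG g1 g2 y v - dG g1 g2 y' v\<bar> \<le> 2 * \<Lambda> * d * norm v"
proof -
  have "\<bar>dG g1 g2 y v - dG g1 g2 y' v\<bar> = \<bar>v$1 * (g1 y - g1 y') + v$2 * (g2 y - g2 y')\<bar>"
    by (simp add: dG_def algebra_simps)
  also have "\<dots> \<le> \<bar>v$1\<bar> * \<bar>g1 y - g1 y'\<bar> + \<bar>v$2\<bar> * \<bar>g2 y - g2 y'\<bar>"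
    by (metis abs_mult abs_triangle_ineq)
  also have "\<dots> \<le> norm v * (\<Lambda> * d) + norm v * (\<Lambda> * d)"
    by (intro add_mono mult_mono component_le_norm_cart assms) auto
  finally show ?thesis by simp
qed

lemma dG_bnd:
  assumes "\<bar>g1 y\<bar> \<le> \<Gamma>" "\<bar>g2 y\<bar> \<le> \<Gamma>"
  shows "\<bar>dG g1 g2 y v\<bar> \<le> 2 * \<Gamma> * norm v"
proof -
  have "\<bar>dG g1 g2 y v\<bar> \<le> \<bar>v$1\<bar> * \<bar>g1 y\<bar> + \<bar>v$2\<bar> * \<bar>g2 y\<bar>"
    unfolding dG_def by (metis abs_mult abs_triangle_ineq)
  also have "\<dots> \<le> norm v * \<Gamma> + norm v * \<Gamma>"
    by (intro add_mono mult_mono component_le_norm_cart assms) auto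
  finally show ?thesis by simp
qed

locale pert =
  fixes L :: "real^2 \<Rightarrow> (real^2) set" and A :: "real^2" and \<gamma> :: "real \<Rightarrow> real^2"
    and D :: "nat \<Rightarrow> real \<Rightarrow> real^2"
    and t0 \<delta>s \<rho> :: real and U :: "(real^2) set" and g1 g2 F :: "real^2 \<Rightarrow> real"
    and \<Lambda> \<Gamma> M :: real and w :: "real^2"
    and Db :: "nat \<Rightarrow> real \<Rightarrow> real" and B c m \<epsilon> :: real
  assumes emb: "embedded_loop A \<gamma>" and AZ: "A \<in> Z2" and Lper: "\<forall>x. \<forall>k\<in>Z2. L (x + k) = L x"
    and D0: "D 0 = \<gamma>" and Dd: "\<And>n t. (D n has_vector_derivative D (Suc n) t) (at t)"
    and ds: "0 < \<delta>s" "\<delta>s \<le> 1/4"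
    and rho: "0 < \<rho>" "\<rho> \<le> 1/4" "cball (\<gamma> t0) \<rho> \<subseteq> U" "open U"
    and Fd: "\<And>y. y\<in>U \<Longrightarrow> (F has_derivative (\<lambda>h. h$1 * g1 y + h$2 * g2 y)) (at y)"
    and Lker: "\<And>y v. y\<in>U \<Longrightarrow> v \<in> L y \<longleftrightarrow> v$1 * g1 y + v$2 * g2 y = 0"
    and Lip: "\<And>y y'. y\<in>cball (\<gamma> t0) \<rho> \<Longrightarrow> y'\<in>cball (\<gamma> t0) \<rho> \<Longrightarrow>
        \<bar>g1 y - g1 y'\<bar> \<le> \<Lambda> * norm (y - y') \<and> \<bar>g2 y - g2 y'\<bar> \<le> \<Lambda> * norm (y - y')"
    and Lam: "0 \<le> \<Lambda>"
    and Gam: "\<And>y. y\<in>cball (\<gamma> t0) \<rho> \<Longrightarrow> \<bar>g1 y\<bar> \<le> \<Gamma> \<and> \<bar>g2 y\<bar> \<le> \<Gamma>"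
    and wnz: "w \<noteq> 0" and wpos: "\<And>y. y\<in>cball (\<gamma> t0) \<rho> \<Longrightarrow> norm w ^ 2 / 2 \<le> w$1 * g1 y + w$2 * g2 y"
    and near: "\<And>s. \<bar>s - t0\<bar> \<le> \<delta>s \<Longrightarrow> \<gamma> s \<in> cball (\<gamma> t0) (\<rho>/2)"
    and pos: "\<And>s. \<bar>s - t0\<bar> \<le> \<delta>s \<Longrightarrow> s \<noteq> t0 \<Longrightarrow> 0 < D 1 s $1 * g1 (\<gamma> s) + D 1 s $2 * g2 (\<gamma> s)"
    and Mb: "\<And>s. \<bar>s - t0\<bar> \<le> \<delta>s \<Longrightarrow> norm (D 1 s) \<le> M"
    and tang0: "D 1 t0 \<in> L (\<gamma> t0)"
    and Dbd: "\<And>n t. (Db n has_real_derivative Db (Suc n) t) (at t)"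
    and Dbvan: "\<forall>n x. \<delta>s/2 < \<bar>x\<bar> \<longrightarrow> Db n x = 0"
    and Dbnn: "\<And>x. 0 \<le> Db 0 x"
    and Dbz: "\<And>x. \<delta>s/2 \<le> \<bar>x\<bar> \<Longrightarrow> Db 0 x = 0 \<and> Db 1 x = 0"
    and Dbpos: "\<And>x. -(\<delta>s/2) < x \<Longrightarrow> x \<le> (\<delta>s/2)/2 \<Longrightarrow> 0 < Db 0 x \<and> (4*\<Lambda>*M/norm w + 1) * Db 0 x \<le> Db 1 x"
    and DbB: "\<And>x. \<bar>Db 0 x\<bar> \<le> B \<and> \<bar>Db 1 x\<bar> \<le> B"
    and cpos: "0 < c"
    and cbound: "\<And>s. t0 + (\<delta>s/2)/2 \<le> s \<Longrightarrow> s \<le> t0 + \<delta>s/2 \<Longrightarrow> c \<le> D 1 s $1 * g1 (\<gamma> s) + D 1 s $2 * g2 (\<gamma> s)"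
    and mpos: "0 < m"
    and mbound: "\<And>s d. \<bar>s - t0\<bar> \<le> \<delta>s/2 \<Longrightarrow> \<delta>s/2 \<le> \<bar>d\<bar> \<Longrightarrow> \<bar>d\<bar> \<le> 1/2 \<Longrightarrow> m \<le> infdist (\<gamma> s - \<gamma> (s - d)) Z2"
    and epos: "0 < \<epsilon>" and e1: "\<epsilon> * B * norm w \<le> \<rho>/2"
    and e2: "\<epsilon> * (2*\<Lambda>*B*M*norm w + B*2*\<Gamma>*norm w) < c" and e3: "\<epsilon> * 2 * B * norm w < m"
begin

definition "Dp n s = Db n (frac (s - t0 + 1/2) - 1/2)"
definition "\<gamma>n s = \<gamma> s + (\<epsilon> * Dp 0 s) *\<^sub>R w"
definition "Dn n s = D n s + (\<epsilon> * Dp n s) *\<^sub>R w"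

lemma ds2: "\<delta>s/2 < 1/2" using ds by simp

lemma Dp_loc: "\<bar>s - t0 - of_int k\<bar> < 1 - \<delta>s/2 \<Longrightarrow> Dp n s = Db n (s - t0 - of_int k)"
  using periodic_bump(1)[OF Dbd Dbvan _ ds2] ds unfolding Dp_def by auto

lemma Dp_der: "(Dp n has_real_derivative Dp (Suc n) t) (at t)"
  using periodic_bump(2)[OF Dbd Dbvan _ ds2] ds unfolding Dp_def by auto

lemma Dp_per: "Dp n (s + 1) = Dp n s"
  using periodic_bump(3)[OF Dbd Dbvan _ ds2] ds unfolding Dp_def by auto

lemma B_nonneg: "0 \<le> B" using DbB[of 0] by linarith

lemma gper: "\<gamma> (t + 1) = \<gamma> t + A" using emb by (simp add: embedded_loop_def)

lemma Dn_der: "(Dn n has_vector_derivative Dn (Suc n) t) (at t)"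
proof -
  have "((\<lambda>s. \<epsilon> * Dp n s) has_real_derivative \<epsilon> * Dp (Suc n) t) (at t)"
    using Dp_der by (auto intro!: derivative_eq_intros)
  then have "((\<lambda>s. (\<epsilon> * Dp n s) *\<^sub>R w) has_vector_derivative (\<epsilon> * Dp (Suc n) t) *\<^sub>R w) (at t)"
    using has_vector_derivative_scaleR[of "\<lambda>s. \<epsilon> * Dp n s" _ t UNIV "\<lambda>_. w" 0] by simp
  then show ?thesis unfolding Dn_def using Dd by (intro has_vector_derivative_add) auto
qed

lemma Dn0: "Dn 0 = \<gamma>n" by (simp add: fun_eq_iff Dn_def \<gamma>n_def D0)

lemma smooth_new: "smooth_curve \<gamma>n"
  unfolding smooth_curve_def using Dn0 Dn_der by blast

lemma vd_new: "vector_derivative \<gamma>n (at t) = Dn 1 t"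
  using Dn_der[of 0 t] unfolding Dn0 by (simp add: vector_derivative_at)

lemma vd_old: "vector_derivative \<gamma> (at t) = D 1 t"
  using Dd[of 0 t] by (simp add: D0 vector_derivative_at)

lemma per_new: "\<gamma>n (t + 1) = \<gamma>n t + A"
  by (simp add: \<gamma>n_def gper Dp_per)

lemma Dn_at_near: "\<bar>s - t0\<bar> \<le> \<delta>s \<Longrightarrow> Dp n s = Db n (s - t0)"
  using Dp_loc[of s 0 n] ds by simp

lemma M_nonneg: "0 \<le> M"
proof -
  have "norm (D 1 t0) \<le> M" using Mb[of t0] ds by simp
  then show ?thesis using norm_ge_zero[of "D 1 t0"] by linarith
qed

lemma near_props:
  assumes sx: "\<bar>s - t0\<bar> \<le> \<delta>s"
  shows "\<gamma>n s \<in> cball (\<gamma> t0) \<rho>" and "0 < dG g1 g2 (\<gamma>n s) (Dn 1 s)"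
proof -
  define x where "x = s - t0"
  define a0 where "a0 = Db 0 x"
  define a1 where "a1 = Db 1 x"
  define v where "v = D 1 s"
  define nw where "nw = norm w"
  define y where "y = \<gamma> s"
  define yn where "yn = \<gamma>n s"
  have nwp: "0 < nw" using wnz by (simp add: nw_def)
  have p0: "Dp 0 s = a0" "Dp 1 s = a1" using Dn_at_near[OF sx] by (simp_all add: a0_def a1_def x_def)
  have a0nn: "0 \<le> a0" using Dbnn by (simp add: a0_def)
  have a0B: "a0 \<le> B" "\<bar>a1\<bar> \<le> B" using DbB[of x] by (auto simp: a0_def a1_def)
  have yn: "yn = y + (\<epsilon> * a0) *\<^sub>R w" by (simp add: yn_def y_def \<gamma>n_def p0)
  have Dn1: "Dn 1 s = v + (\<epsilon> * a1) *\<^sub>R w" unfolding Dn_def v_def p0 by simp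
  have dyn: "norm (yn - y) = \<epsilon> * a0 * nw" using yn epos a0nn by (simp add: nw_def)
  have "\<epsilon> * a0 * nw \<le> \<epsilon> * B * nw" using a0B epos nwp by (intro mult_right_mono mult_left_mono) auto
  then have dyn2: "norm (yn - y) \<le> \<rho>/2" using dyn e1 by (simp add: nw_def)
  have yC: "y \<in> cball (\<gamma> t0) (\<rho>/2)" using near[OF sx] by (simp add: y_def)
  then have yC': "y \<in> cball (\<gamma> t0) \<rho>" using rho by auto
  have ynC: "yn \<in> cball (\<gamma> t0) \<rho>"
  proof -
    have "dist (\<gamma> t0) yn \<le> dist (\<gamma> t0) y + dist y yn" by (rule dist_triangle)
    also have "dist y yn = norm (yn - y)" by (simp add: dist_norm norm_minus_commute)
    finally show ?thesis using yC dyn2 by auto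
  qed
  then show "\<gamma>n s \<in> cball (\<gamma> t0) \<rho>" by (simp add: yn_def)
  have vM: "norm v \<le> M" using Mb[OF sx] by (simp add: v_def)
  have psi: "dG g1 g2 yn (Dn 1 s) = dG g1 g2 y v + (dG g1 g2 yn v - dG g1 g2 y v) + \<epsilon> * a1 * dG g1 g2 yn w"
    unfolding Dn1 dG_add by simp
  have E: "\<bar>dG g1 g2 yn v - dG g1 g2 y v\<bar> \<le> 2 * \<Lambda> * (\<epsilon> * a0 * nw) * M"
  proof -
    have "\<bar>dG g1 g2 yn v - dG g1 g2 y v\<bar> \<le> 2 * \<Lambda> * norm (yn - y) * norm v"
      using Lip[OF ynC yC'] by (intro dG_lip) auto
    also have "\<dots> \<le> 2 * \<Lambda> * (\<epsilon> * a0 * nw) * M"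
      unfolding dyn using vM Lam epos a0nn nwp by (intro mult_left_mono) auto
    finally show ?thesis .
  qed
  have phi_def: "dG g1 g2 y v = D 1 s $1 * g1 (\<gamma> s) + D 1 s $2 * g2 (\<gamma> s)"
    by (simp add: dG_def v_def y_def)
  have yU: "y \<in> U" "yn \<in> U" using yC' ynC rho by auto
  have phi_nn: "0 \<le> dG g1 g2 y v"
  proof (cases "s = t0")
    case True
    then have "v \<in> L y" using tang0 by (simp add: v_def y_def)
    then show ?thesis using Lker[OF yU(1)] by (simp add: dG_def)
  next
    case False then show ?thesis using pos[OF sx] by (simp add: phi_def less_imp_le)
  qed
  show "0 < dG g1 g2 (\<gamma>n s) (Dn 1 s)"
  proof (cases "\<delta>s/2 \<le> \<bar>x\<bar>")
    case True
    then have "a0 = 0" "a1 = 0" using Dbz[OF True] by (auto simp: a0_def a1_def)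
    moreover have "s \<noteq> t0" using True ds by (auto simp: x_def)
    ultimately have "yn = y" "Dn 1 s = v" using yn Dn1 by auto
    then show ?thesis using pos[OF sx] \<open>s \<noteq> t0\<close> unfolding yn_def[symmetric] phi_def[symmetric] by simp
  next
    case False
    show ?thesis
    proof (cases "x \<le> (\<delta>s/2)/2")
      case True
      have xr: "-(\<delta>s/2) < x" using False by linarith
      have a: "0 < a0" "(4*\<Lambda>*M/nw + 1) * a0 \<le> a1" using Dbpos[OF xr True] by (auto simp: a0_def a1_def nw_def)
      have k0: "0 \<le> 4*\<Lambda>*M/nw" using Lam M_nonneg nwp by auto
      have a1p: "0 \<le> a1" using a k0 by (smt (verit) mult_nonneg_nonneg)
      have W: "nw^2/2 \<le> dG g1 g2 yn w" using wpos[OF ynC] by (simp add: dG_def nw_def)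
      have "\<epsilon> * a1 * (nw^2/2) \<le> \<epsilon> * a1 * dG g1 g2 yn w"
        using W epos a1p by (intro mult_left_mono) auto
      moreover have "\<epsilon> * ((4*\<Lambda>*M/nw + 1) * a0) * (nw^2/2) \<le> \<epsilon> * a1 * (nw^2/2)"
        using a epos by (intro mult_right_mono mult_left_mono) auto
      moreover have "\<epsilon> * ((4*\<Lambda>*M/nw + 1) * a0) * (nw^2/2) = 2 * \<Lambda> * (\<epsilon> * a0 * nw) * M + \<epsilon> * a0 * nw^2/2"
        using nwp by (simp add: field_simps power2_eq_square)
      moreover have "0 < \<epsilon> * a0 * nw^2/2" using epos a nwp by simp
      ultimately show ?thesis using psi E phi_nn unfolding yn_def[symmetric] by linarith
    next
      case False2: False
      have xr: "t0 + (\<delta>s/2)/2 \<le> s" "s \<le> t0 + \<delta>s/2" using False False2 unfolding x_def by (auto simp: abs_if split: if_splits)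
      have c: "c \<le> dG g1 g2 y v" using cbound[OF xr] by (simp add: phi_def)
      have "\<bar>\<epsilon> * a1 * dG g1 g2 yn w\<bar> \<le> \<epsilon> * B * (2 * \<Gamma> * nw)"
      proof -
        have "\<bar>dG g1 g2 yn w\<bar> \<le> 2 * \<Gamma> * nw" using Gam[OF ynC] dG_bnd[of g1 yn \<Gamma> g2 w] by (auto simp: nw_def)
        then have "\<bar>a1\<bar> * \<bar>dG g1 g2 yn w\<bar> \<le> B * (2 * \<Gamma> * nw)"
          using a0B by (intro mult_mono) auto
        then show ?thesis using epos by (simp add: abs_mult mult.assoc mult_left_mono)
      qed
      moreover have "2 * \<Lambda> * (\<epsilon> * a0 * nw) * M \<le> 2 * \<Lambda> * (\<epsilon> * B * nw) * M"
        using a0B Lam epos nwp M_nonneg by (intro mult_right_mono mult_left_mono) auto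
      moreover have "\<epsilon> * (2*\<Lambda>*B*M*nw + B*2*\<Gamma>*nw) = 2 * \<Lambda> * (\<epsilon> * B * nw) * M + \<epsilon> * B * (2 * \<Gamma> * nw)"
        by (simp add: algebra_simps)
      ultimately show ?thesis using psi E c e2 unfolding yn_def[symmetric] nw_def[symmetric] by linarith
    qed
  qed
qed

lemma Fchain:
  assumes "\<bar>s - t0\<bar> \<le> \<delta>s"
  shows "((\<lambda>s. F (\<gamma>n s)) has_real_derivative dG g1 g2 (\<gamma>n s) (Dn 1 s)) (at s)"
proof -
  have U: "\<gamma>n s \<in> U" using near_props(1)[OF assms] rho by auto
  have g: "(\<gamma>n has_derivative (\<lambda>x. x *\<^sub>R Dn 1 s)) (at s)"
    using Dn_der[of 0 s] unfolding Dn0 has_vector_derivative_def by simp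
  have "((\<lambda>s. F (\<gamma>n s)) has_derivative (\<lambda>x. (x *\<^sub>R Dn 1 s)$1 * g1 (\<gamma>n s) + (x *\<^sub>R Dn 1 s)$2 * g2 (\<gamma>n s))) (at s)"
    using has_derivative_compose[OF g Fd[OF U]] by simp
  moreover have "(\<lambda>x. (x *\<^sub>R Dn 1 s)$1 * g1 (\<gamma>n s) + (x *\<^sub>R Dn 1 s)$2 * g2 (\<gamma>n s)) = (*) (dG g1 g2 (\<gamma>n s) (Dn 1 s))"
    by (auto simp: fun_eq_iff dG_def algebra_simps)
  ultimately show ?thesis by (simp add: has_field_derivative_def)
qed

lemma inj_near_lt:
  assumes "\<bar>s1 - t0\<bar> \<le> \<delta>s" "\<bar>s2 - t0\<bar> \<le> \<delta>s" "s1 < s2"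
  shows "\<gamma>n s1 \<noteq> \<gamma>n s2"
proof -
  have "\<And>x. s1 \<le> x \<Longrightarrow> x \<le> s2 \<Longrightarrow> ((\<lambda>s. F (\<gamma>n s)) has_real_derivative dG g1 g2 (\<gamma>n x) (Dn 1 x)) (at x)"
    using assms by (intro Fchain) auto
  from MVT2[OF assms(3) this] obtain z where z: "s1 < z" "z < s2"
    "F (\<gamma>n s2) - F (\<gamma>n s1) = (s2 - s1) * dG g1 g2 (\<gamma>n z) (Dn 1 z)" by blast
  have "\<bar>z - t0\<bar> \<le> \<delta>s" using assms z by auto
  then have "0 < dG g1 g2 (\<gamma>n z) (Dn 1 z)" by (rule near_props(2))
  then have "0 < (s2 - s1) * dG g1 g2 (\<gamma>n z) (Dn 1 z)" using assms(3) by simp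
  then have "F (\<gamma>n s2) \<noteq> F (\<gamma>n s1)" using z(3) by linarith
  then show ?thesis by metis
qed

lemma inj_near:
  assumes "\<bar>s1 - t0\<bar> \<le> \<delta>s" "\<bar>s2 - t0\<bar> \<le> \<delta>s" "\<gamma>n s1 = \<gamma>n s2"
  shows "s1 = s2"
  using inj_near_lt[of s1 s2] inj_near_lt[of s2 s1] assms by (metis linorder_neqE_linordered_idom)

lemma shift_new: "\<gamma>n (t + of_int k) = \<gamma>n t + of_int k *\<^sub>R A"
  using shift_int[of \<gamma>n A] per_new by blast

lemma Dn1_shift: "Dn 1 (t + of_int k) = Dn 1 t"
  using deriv_shift[of \<gamma>n A "Dn 1"] per_new Dn_der[of 0] unfolding Dn0 by auto

lemma shift_old: "\<gamma> (t + of_int k) = \<gamma> t + of_int k *\<^sub>R A"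
  using shift_int[of \<gamma> A] gper by blast

lemma D1_shift: "D 1 (t + of_int k) = D 1 t"
  using deriv_shift[of \<gamma> A "D 1"] gper Dd[of 0] unfolding D0 by auto

lemma L_shift: "L (y + of_int k *\<^sub>R A) = L y"
  using Lper Z2_int_scale[OF AZ] by blast

lemma Dp0_bnd: "\<bar>Dp 0 x\<bar> \<le> B" using DbB by (simp add: Dp_def)

definition "k0 s = \<lfloor>s - t0 + 1/2\<rfloor>"

lemma k0_bnd: "\<bar>s - t0 - of_int (k0 s)\<bar> \<le> 1/2"
proof -
  have f1: "s - t0 + 1/2 - of_int (k0 s) < 1" "0 \<le> s - t0 + 1/2 - of_int (k0 s)"
    using frac_lt_1[of "s - t0 + 1/2"] frac_ge_0[of "s - t0 + 1/2"] by (simp_all add: frac_def k0_def)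
  then show ?thesis unfolding abs_le_iff by linarith
qed

lemma outside:
  assumes "\<delta>s/2 \<le> \<bar>s - t0 - of_int (k0 s)\<bar>"
  shows "Dp 0 s = 0" "Dp 1 s = 0" "\<gamma>n s = \<gamma> s" "Dn 1 s = D 1 s"
proof -
  have l: "\<bar>s - t0 - of_int (k0 s)\<bar> < 1 - \<delta>s/2" using k0_bnd[of s] ds by linarith
  show "Dp 0 s = 0" "Dp 1 s = 0" using Dp_loc[OF l] Dbz[OF assms] by auto
  then show "\<gamma>n s = \<gamma> s" "Dn 1 s = D 1 s" by (auto simp: \<gamma>n_def Dn_def)
qed

lemma old_emb: "\<gamma> s - \<gamma> t \<in> Z2 \<Longrightarrow> s - t \<in> \<int>"
  using emb by (simp add: embedded_loop_def)

lemma emb_center: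
  assumes s: "\<bar>s - t0\<bar> \<le> \<delta>s/2" and z: "\<gamma>n s - \<gamma>n t \<in> Z2"
  shows "s - t \<in> \<int>"
proof -
  define j where "j = \<lfloor>t - s + 1/2\<rfloor>"
  define t2 where "t2 = t - of_int j"
  have f1: "t - s + 1/2 - of_int j < 1" "0 \<le> t - s + 1/2 - of_int j"
    using frac_lt_1[of "t - s + 1/2"] frac_ge_0[of "t - s + 1/2"] by (simp_all add: frac_def j_def)
  have t2b: "\<bar>s - t2\<bar> \<le> 1/2" using f1 unfolding t2_def abs_le_iff by linarith
  have "\<gamma>n t = \<gamma>n t2 + of_int j *\<^sub>R A" using shift_new[of t2 j] by (simp add: t2_def)
  then have z2: "\<gamma>n s - \<gamma>n t2 \<in> Z2"
    using Z2_add[OF z Z2_int_scale[OF AZ, of j]] by (simp add: algebra_simps)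
  have st2: "s - t2 \<in> \<int>"
  proof (cases "\<bar>s - t2\<bar> < \<delta>s/2")
    case True
    have a: "\<bar>s - t0\<bar> \<le> \<delta>s" "\<bar>t2 - t0\<bar> \<le> \<delta>s" using True s ds by (auto simp: abs_if split: if_splits)
    have "norm (\<gamma>n s - \<gamma>n t2) \<le> norm (\<gamma>n s - \<gamma> t0) + norm (\<gamma> t0 - \<gamma>n t2)"
      by (rule order_trans[OF _ norm_triangle_ineq]) simp
    also have "\<dots> \<le> \<rho> + \<rho>" using near_props(1)[OF a(1)] near_props(1)[OF a(2)]
      by (intro add_mono) (auto simp: dist_norm norm_minus_commute)
    finally have "norm (\<gamma>n s - \<gamma>n t2) < 1" using rho by linarith
    then have "\<gamma>n s = \<gamma>n t2" using Z2_small[OF z2] by simp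
    then have "s = t2" using inj_near a by blast
    then show ?thesis by simp
  next
    case False
    have "m \<le> infdist (\<gamma> s - \<gamma> (s - (s - t2))) Z2"
      using False t2b s by (intro mbound) auto
    also have "\<dots> \<le> dist (\<gamma> s - \<gamma> t2) (\<gamma>n s - \<gamma>n t2)" using infdist_le[OF z2] by simp
    also have "\<dots> = norm ((\<epsilon> * (Dp 0 s - Dp 0 t2)) *\<^sub>R w)"
      by (simp add: dist_norm \<gamma>n_def algebra_simps norm_minus_commute)
    also have "\<dots> = \<epsilon> * \<bar>Dp 0 s - Dp 0 t2\<bar> * norm w" using epos by (simp add: abs_mult)
    also have "\<dots> \<le> \<epsilon> * (2 * B) * norm w"
      using Dp0_bnd[of s] Dp0_bnd[of t2] epos by (intro mult_right_mono mult_left_mono) auto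
    finally show ?thesis using e3 by simp
  qed
  then obtain n where "s - t2 = of_int n" by (auto elim: Ints_cases)
  then have "s - t = of_int (n - j)" by (simp add: t2_def)
  then show ?thesis by simp
qed

lemma emb_support:
  assumes s: "\<bar>s - t0 - of_int (k0 s)\<bar> \<le> \<delta>s/2" and z: "\<gamma>n s - \<gamma>n t \<in> Z2"
  shows "s - t \<in> \<int>"
proof -
  define k where "k = k0 s"
  have e: "\<gamma>n (s - of_int k) - \<gamma>n (t - of_int k) = \<gamma>n s - \<gamma>n t"
    using shift_new[of "s - of_int k" k] shift_new[of "t - of_int k" k] by simp
  have "(s - of_int k) - (t - of_int k) \<in> \<int>"
  proof (rule emb_center)
    show "\<bar>s - of_int k - t0\<bar> \<le> \<delta>s / 2" using s by (simp add: k_def algebra_simps)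
    show "\<gamma>n (s - of_int k) - \<gamma>n (t - of_int k) \<in> Z2" using z e by simp
  qed
  then show ?thesis by simp
qed

lemma emb_new: "\<gamma>n s - \<gamma>n t \<in> Z2 \<Longrightarrow> s - t \<in> \<int>"
proof -
  assume z: "\<gamma>n s - \<gamma>n t \<in> Z2"
  show ?thesis
  proof (cases "\<bar>s - t0 - of_int (k0 s)\<bar> \<le> \<delta>s/2")
    case True then show ?thesis using emb_support z by blast
  next
    case Fs: False
    show ?thesis
    proof (cases "\<bar>t - t0 - of_int (k0 t)\<bar> \<le> \<delta>s/2")
      case True
      have "\<gamma>n t - \<gamma>n s \<in> Z2" using Z2_uminus[OF z] by simp
      then have "t - s \<in> \<int>" using emb_support True by blast
      then have "-(t - s) \<in> \<int>" by (rule Ints_minus)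
      then show ?thesis by simp
    next
      case False
      then have "\<gamma>n s = \<gamma> s" "\<gamma>n t = \<gamma> t" using outside Fs by auto
      then show ?thesis using old_emb z by simp
    qed
  qed
qed

lemma imm_new: "Dn 1 t \<noteq> 0"
proof (cases "\<bar>t - t0 - of_int (k0 t)\<bar> \<le> \<delta>s")
  case True
  have "0 < dG g1 g2 (\<gamma>n (t - of_int (k0 t))) (Dn 1 (t - of_int (k0 t)))"
    using True by (intro near_props(2)) auto
  moreover have "Dn 1 (t - of_int (k0 t)) = Dn 1 t" using Dn1_shift[of "t - of_int (k0 t)" "k0 t"] by simp
  ultimately show ?thesis by (auto simp: dG_def)
next
  case False
  then have "\<delta>s/2 \<le> \<bar>t - t0 - of_int (k0 t)\<bar>" using ds by simp
  then have "Dn 1 t = D 1 t" using outside by auto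
  moreover have "D 1 t \<noteq> 0" using emb vd_old by (simp add: embedded_loop_def)
  ultimately show ?thesis by simp
qed

lemma embedded_new: "embedded_loop A \<gamma>n"
  unfolding embedded_loop_def using smooth_new per_new vd_new imm_new emb_new by auto

lemma tang_new_iff: "(Dn 1 s \<in> L (\<gamma>n s)) \<longleftrightarrow> (Dn 1 (s - of_int k) \<in> L (\<gamma>n (s - of_int k)))"
  using shift_new[of "s - of_int k" k] Dn1_shift[of "s - of_int k" k] L_shift[of "\<gamma>n (s - of_int k)" k] by simp

lemma tang_old_iff: "(D 1 s \<in> L (\<gamma> s)) \<longleftrightarrow> (D 1 (s - of_int k) \<in> L (\<gamma> (s - of_int k)))"
  using shift_old[of "s - of_int k" k] D1_shift[of "s - of_int k" k] L_shift[of "\<gamma> (s - of_int k)" k] by simp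

lemma tangencies_new: "tangencies L \<gamma>n = tangencies L \<gamma> - {frac t0}"
proof -
  have "(Dn 1 s \<in> L (\<gamma>n s)) \<longleftrightarrow> (D 1 s \<in> L (\<gamma> s) \<and> s \<noteq> frac t0)" if s01: "0 \<le> s" "s < 1" for s
  proof -
    define k where "k = k0 s"
    define s' where "s' = s - of_int k"
    have fr: "s = frac t0 \<longleftrightarrow> s' = t0"
    proof
      assume "s = frac t0"
      then have "t0 - s \<in> \<int>" using frac_unique_iff[of t0 s] by simp
      then obtain n where n: "s - t0 = of_int n" by (metis Ints_cases minus_diff_eq Ints_minus)
      have "k = n" unfolding k_def k0_def n by linarith
      then show "s' = t0" using n by (simp add: s'_def)
    next
      assume "s' = t0"
      then have "t0 - s = - of_int k" by (simp add: s'_def)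
      then have "t0 - s \<in> \<int>" by simp
      then show "s = frac t0" using frac_unique_iff[of t0 s] s01 by simp
    qed
    have tn: "(Dn 1 s \<in> L (\<gamma>n s)) \<longleftrightarrow> (Dn 1 s' \<in> L (\<gamma>n s'))" unfolding s'_def by (rule tang_new_iff)
    have to: "(D 1 s \<in> L (\<gamma> s)) \<longleftrightarrow> (D 1 s' \<in> L (\<gamma> s'))" unfolding s'_def by (rule tang_old_iff)
    show ?thesis
    proof (cases "\<bar>s' - t0\<bar> \<le> \<delta>s")
      case True
      have U1: "\<gamma>n s' \<in> U" using near_props(1)[OF True] rho by auto
      have "\<not> (Dn 1 s' \<in> L (\<gamma>n s'))"
        using near_props(2)[OF True] Lker[OF U1] by (simp add: dG_def)
      moreover have U2: "\<gamma> s' \<in> U" using near[OF True] rho by auto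
      have "(D 1 s' \<in> L (\<gamma> s')) \<longleftrightarrow> s' = t0"
        using pos[OF True] Lker[OF U2] tang0 by (metis less_irrefl)
      ultimately show ?thesis using tn to fr by auto
    next
      case False
      then have "\<delta>s/2 \<le> \<bar>s - t0 - of_int (k0 s)\<bar>" using ds by (simp add: s'_def k_def algebra_simps)
      then have o: "\<gamma>n s = \<gamma> s" "Dn 1 s = D 1 s" using outside[of s] by auto
      have "s \<noteq> frac t0" using fr False ds by auto
      then show ?thesis using o by simp
    qed
  qed
  then show ?thesis unfolding tangencies_def vd_new vd_old by auto
qed

lemma result: "\<exists>g. embedded_loop A g \<and> tangencies L g = tangencies L \<gamma> - {frac t0}"
  using embedded_new tangencies_new by blast

end



lemma lip_cball:
  fixes g a b :: "real^2 \<Rightarrow> real"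
  assumes der: "\<And>y. y\<in>U \<Longrightarrow> (g has_derivative (\<lambda>h. h$1 * a y + h$2 * b y)) (at y)"
    and ca: "continuous_on U a" and cb: "continuous_on U b" and sub: "cball p r \<subseteq> U"
  shows "\<exists>\<Lambda>\<ge>0. \<forall>y\<in>cball p r. \<forall>y'\<in>cball p r. \<bar>g y - g y'\<bar> \<le> \<Lambda> * norm (y - y')"
proof -
  have "compact ((\<lambda>y. \<bar>a y\<bar> + \<bar>b y\<bar>) ` cball p r)"
    by (intro compact_continuous_image continuous_intros continuous_on_subset[OF ca sub] continuous_on_subset[OF cb sub]) auto
  then obtain K where K: "\<forall>z\<in>(\<lambda>y. \<bar>a y\<bar> + \<bar>b y\<bar>) ` cball p r. norm z \<le> K"
    using compact_imp_bounded bounded_iff by metis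
  define \<Lambda> where "\<Lambda> = max K 0"
  have "\<bar>g y - g y'\<bar> \<le> \<Lambda> * norm (y - y')" if y: "y \<in> cball p r" "y' \<in> cball p r" for y y'
  proof -
    have "norm (g y - g y') \<le> \<Lambda> * norm (y - y')"
    proof (rule differentiable_bound[OF convex_cball])
      fix x assume x: "x \<in> cball p r"
      show "(g has_derivative (\<lambda>h. h$1 * a x + h$2 * b x)) (at x within cball p r)"
      proof -
        have "x \<in> U" using x sub by auto
        then show ?thesis using der[of x] by (auto intro: has_derivative_at_withinI)
      qed
      have "norm (h$1 * a x + h$2 * b x) \<le> \<Lambda> * norm h" for h
      proof -
        have "norm (h$1 * a x + h$2 * b x) \<le> \<bar>h$1\<bar> * \<bar>a x\<bar> + \<bar>h$2\<bar> * \<bar>b x\<bar>"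
          by (simp add: abs_mult[symmetric] abs_triangle_ineq)
        also have "\<dots> \<le> norm h * \<bar>a x\<bar> + norm h * \<bar>b x\<bar>"
          by (intro add_mono mult_right_mono component_le_norm_cart) auto
        also have "\<dots> = norm h * (\<bar>a x\<bar> + \<bar>b x\<bar>)" by (simp add: algebra_simps)
        also have "\<dots> \<le> norm h * \<Lambda>" using K x by (intro mult_left_mono) (force simp: \<Lambda>_def)+
        finally show ?thesis by (simp add: mult.commute)
      qed
      then show "onorm (\<lambda>h. h$1 * a x + h$2 * b x) \<le> \<Lambda>" by (intro onorm_le) auto
    qed (use y in auto)
    then show ?thesis by simp
  qed
  moreover have "\<Lambda> \<ge> 0" by (simp add: \<Lambda>_def)
  ultimately show ?thesis by blast
qed

lemma bnd_cball:
  fixes g :: "real^2 \<Rightarrow> real"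
  assumes "continuous_on U g" "cball p r \<subseteq> U"
  shows "\<exists>\<Gamma>. \<forall>y\<in>cball p r. \<bar>g y\<bar> \<le> \<Gamma>"
proof -
  have "compact (g ` cball p r)"
    by (intro compact_continuous_image continuous_on_subset[OF assms(1) assms(2)]) auto
  then obtain K where "\<forall>z\<in>g ` cball p r. norm z \<le> K" using compact_imp_bounded bounded_iff by metis
  then show ?thesis by auto
qed

lemma const_sign:
  fixes h :: "real \<Rightarrow> real"
  assumes "a \<le> x" "x \<le> b" "continuous_on {a..b} h" "\<forall>y\<in>{a..b}. h y \<noteq> 0"
  shows "0 < h x \<longleftrightarrow> 0 < h a"
proof (rule ccontr)
  assume ne: "\<not> ?thesis"
  have c: "continuous_on {a..x} h" using assms by (auto intro: continuous_on_subset)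
  have "\<exists>y. a \<le> y \<and> y \<le> x \<and> h y = 0"
  proof (cases "0 < h x")
    case True
    then have "h a \<le> 0" using ne by auto
    then show ?thesis using IVT'[of h a 0 x] True assms(1) c by auto
  next
    case False
    then have "0 < h a" "h x \<le> 0" using ne by auto
    then show ?thesis using IVT2'[of h x 0 a] assms(1) c by auto
  qed
  then show False using assms by auto
qed

lemma cross_sign:
  fixes \<phi> \<phi>' :: "real \<Rightarrow> real"
  assumes d: "0 < d"
    and der: "\<And>s. \<bar>s - t0\<bar> \<le> d \<Longrightarrow> (\<phi> has_real_derivative \<phi>' s) (at s)"
    and cont: "continuous_on {t0-d..t0+d} \<phi>'"
    and nz: "\<And>s. \<bar>s - t0\<bar> \<le> d \<Longrightarrow> s \<noteq> t0 \<Longrightarrow> \<phi>' s \<noteq> 0"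
    and z: "\<phi> t0 = 0"
    and cr1: "\<exists>s1. \<bar>s1 - t0\<bar> < d \<and> \<phi> s1 < 0" and cr2: "\<exists>s2. \<bar>s2 - t0\<bar> < d \<and> 0 < \<phi> s2"
  shows "\<exists>\<sigma>::real. (\<sigma> = 1 \<or> \<sigma> = -1) \<and> (\<forall>s. \<bar>s - t0\<bar> \<le> d \<longrightarrow> s \<noteq> t0 \<longrightarrow> 0 < \<sigma> * \<phi>' s)"
proof -
  have left: "0 < \<phi>' s \<longleftrightarrow> 0 < \<phi>' (t0 - d)" if "t0 - d \<le> s" "s < t0" for s
    by (rule const_sign[of _ _ s]) (use that nz in \<open>auto intro: continuous_on_subset[OF cont]\<close>)
  have right: "0 < \<phi>' s \<longleftrightarrow> 0 < \<phi>' (t0 + d)" if "t0 < s" "s \<le> t0 + d" for s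
  proof -
    have c: "continuous_on {s..t0 + d} \<phi>'" using that by (auto intro: continuous_on_subset[OF cont])
    have "\<forall>y\<in>{s..t0 + d}. \<phi>' y \<noteq> 0" using that nz by auto
    then show ?thesis using const_sign[of s "t0 + d" "t0 + d" \<phi>'] that c by auto
  qed
  have nl: "\<phi>' (t0 - d) \<noteq> 0" and nr: "\<phi>' (t0 + d) \<noteq> 0" using nz d by auto
  have mvl: "\<exists>z. s < z \<and> z < t0 \<and> \<phi> t0 - \<phi> s = (t0 - s) * \<phi>' z" if "t0 - d < s" "s < t0" for s
    using MVT2[of s t0 \<phi> \<phi>'] der that by auto
  have mvr: "\<exists>z. t0 < z \<and> z < s \<and> \<phi> s - \<phi> t0 = (s - t0) * \<phi>' z" if "t0 < s" "s < t0 + d" for s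
    using MVT2[of t0 s \<phi> \<phi>'] der that by auto
  have Lsg: "(0 < \<phi>'(t0-d) \<longrightarrow> \<phi> s < 0) \<and> (\<phi>'(t0-d) < 0 \<longrightarrow> 0 < \<phi> s)" if lt: "t0 - d < s" "s < t0" for s
  proof -
    obtain z where z1: "s < z" "z < t0" "\<phi> t0 - \<phi> s = (t0 - s) * \<phi>' z" using mvl[OF lt] by blast
    have "0 < \<phi>' z \<longleftrightarrow> 0 < \<phi>' (t0 - d)" using left[of z] z1 lt by auto
    moreover have "\<phi>' z \<noteq> 0" using nz[of z] z1 lt by auto
    moreover have "0 < t0 - s" using lt by simp
    ultimately show ?thesis using z1(3) z by (smt (verit) mult_pos_pos mult_pos_neg)
  qed
  have Rsg: "(0 < \<phi>'(t0+d) \<longrightarrow> 0 < \<phi> s) \<and> (\<phi>'(t0+d) < 0 \<longrightarrow> \<phi> s < 0)" if lt: "t0 < s" "s < t0 + d" for s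
  proof -
    obtain z where z1: "t0 < z" "z < s" "\<phi> s - \<phi> t0 = (s - t0) * \<phi>' z" using mvr[OF lt] by blast
    have "0 < \<phi>' z \<longleftrightarrow> 0 < \<phi>' (t0 + d)" using right[of z] z1 lt by auto
    moreover have "\<phi>' z \<noteq> 0" using nz[of z] z1 lt by auto
    moreover have "0 < s - t0" using lt by simp
    ultimately show ?thesis using z1(3) z by (smt (verit) mult_pos_pos mult_pos_neg)
  qed
  obtain s1 where s1: "\<bar>s1 - t0\<bar> < d" "\<phi> s1 < 0" using cr1 by blast
  obtain s2 where s2: "\<bar>s2 - t0\<bar> < d" "0 < \<phi> s2" using cr2 by blast
  have s1ne: "s1 \<noteq> t0" and s2ne: "s2 \<noteq> t0" using s1 s2 z by auto
  show ?thesis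
  proof (cases "0 < \<phi>' (t0 - d)")
    case Lp: True
    show ?thesis
    proof (cases "0 < \<phi>' (t0 + d)")
      case True
      have "0 < 1 * \<phi>' s" if "\<bar>s - t0\<bar> \<le> d" "s \<noteq> t0" for s
      proof (cases "s < t0")
        case True then show ?thesis using left[of s] Lp that by auto
      next
        case False then show ?thesis using right[of s] \<open>0 < \<phi>' (t0 + d)\<close> that by auto
      qed
      then show ?thesis by blast
    next
      case False
      then have Rn: "\<phi>' (t0 + d) < 0" using nr by linarith
      show ?thesis
      proof (cases "s2 < t0")
        case True then show ?thesis using Lsg[of s2] Lp s2 by auto
      next
        case False then show ?thesis using Rsg[of s2] Rn s2 s2ne by auto
      qed
    qed
  next
    case False
    then have Ln: "\<phi>' (t0 - d) < 0" using nl by linarith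
    show ?thesis
    proof (cases "0 < \<phi>' (t0 + d)")
      case True
      show ?thesis
      proof (cases "s1 < t0")
        case True then show ?thesis using Lsg[of s1] Ln s1 by auto
      next
        case False then show ?thesis using Rsg[of s1] \<open>0 < \<phi>' (t0 + d)\<close> s1 s1ne by auto
      qed
    next
      case False
      then have Rn: "\<phi>' (t0 + d) < 0" using nr by linarith
      have "0 < (-1) * \<phi>' s" if "\<bar>s - t0\<bar> \<le> d" "s \<noteq> t0" for s
      proof (cases "s < t0")
        case True then show ?thesis using left[of s] Ln nz[of s] that by auto
      next
        case False then show ?thesis using right[of s] Rn nz[of s] that by auto
      qed
      then show ?thesis by blast
    qed
  qed
qed



lemma lfi_analysis:
  assumes "local_first_integral L p U f"
  obtains g1 g2 where "open U" "p \<in> U" "f p = 0"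
    "\<And>y. y\<in>U \<Longrightarrow> (f has_derivative (\<lambda>h. h$1 * g1 y + h$2 * g2 y)) (at y)"
    "\<And>y v. y\<in>U \<Longrightarrow> v \<in> L y \<longleftrightarrow> v$1 * g1 y + v$2 * g2 y = 0"
    "\<And>y. y\<in>U \<Longrightarrow> g1 y \<noteq> 0 \<or> g2 y \<noteq> 0"
    "continuous_on U g1" "continuous_on U g2"
    "\<And>r. cball p r \<subseteq> U \<Longrightarrow> \<exists>\<Lambda>\<ge>0. \<forall>y\<in>cball p r. \<forall>y'\<in>cball p r.
        \<bar>g1 y - g1 y'\<bar> \<le> \<Lambda> * norm (y - y') \<and> \<bar>g2 y - g2 y'\<bar> \<le> \<Lambda> * norm (y - y')"
proof -
  have U: "open U" "p \<in> U" "smooth_on U f" "f p = 0"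
    and Lf: "\<forall>y\<in>U. \<exists>f'. (f has_derivative f') (at y) \<and> f' \<noteq> (\<lambda>h. 0) \<and> L y = {h. f' h = 0}"
    using assms unfolding local_first_integral_def by auto
  obtain P :: "bool list \<Rightarrow> real^2 \<Rightarrow> real" where P0: "\<forall>x\<in>U. P [] x = f x"
    and Pd: "\<forall>is. \<forall>x\<in>U. (P is has_derivative
          (\<lambda>h. (h $ 1) *\<^sub>R P (True # is) x + (h $ 2) *\<^sub>R P (False # is) x)) (at x)"
    using U(3) unfolding smooth_on_def by blast
  define g1 where "g1 = P [True]"
  define g2 where "g2 = P [False]"
  have fd: "(f has_derivative (\<lambda>h. h$1 * g1 y + h$2 * g2 y)) (at y)" if y: "y \<in> U" for y
  proof -
    have "(P [] has_derivative (\<lambda>h. h$1 * g1 y + h$2 * g2 y)) (at y)"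
      using Pd y by (simp add: g1_def g2_def)
    then show ?thesis
      by (rule has_derivative_transform_within_open[OF _ U(1) y]) (use P0 in auto)
  qed
  have Pc: "continuous_on U (P is)" for "is"
  proof (rule has_derivative_continuous_on)
    fix x assume "x \<in> U"
    then show "(P is has_derivative (\<lambda>h. (h $ 1) *\<^sub>R P (True # is) x + (h $ 2) *\<^sub>R P (False # is) x)) (at x within U)"
      using Pd by (auto intro: has_derivative_at_withinI)
  qed
  have lk: "v \<in> L y \<longleftrightarrow> v$1 * g1 y + v$2 * g2 y = 0" "g1 y \<noteq> 0 \<or> g2 y \<noteq> 0" if y: "y \<in> U" for y v
  proof -
    obtain f' where f': "(f has_derivative f') (at y)" "f' \<noteq> (\<lambda>h. 0)" "L y = {h. f' h = 0}"
      using Lf y by blast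
    have "f' = (\<lambda>h. h$1 * g1 y + h$2 * g2 y)" using has_derivative_unique[OF f'(1) fd[OF y]] .
    then show "v \<in> L y \<longleftrightarrow> v$1 * g1 y + v$2 * g2 y = 0" "g1 y \<noteq> 0 \<or> g2 y \<noteq> 0"
      using f'(2,3) by auto
  qed
  have lip: "\<exists>\<Lambda>\<ge>0. \<forall>y\<in>cball p r. \<forall>y'\<in>cball p r.
        \<bar>g1 y - g1 y'\<bar> \<le> \<Lambda> * norm (y - y') \<and> \<bar>g2 y - g2 y'\<bar> \<le> \<Lambda> * norm (y - y')"
    if sub: "cball p r \<subseteq> U" for r
  proof -
    obtain \<Lambda>1 where l1: "\<Lambda>1 \<ge> 0" "\<forall>y\<in>cball p r. \<forall>y'\<in>cball p r. \<bar>g1 y - g1 y'\<bar> \<le> \<Lambda>1 * norm (y - y')"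
      using lip_cball[of U g1 "P [True, True]" "P [False, True]" p r] Pd Pc sub by (auto simp: g1_def)
    obtain \<Lambda>2 where l2: "\<Lambda>2 \<ge> 0" "\<forall>y\<in>cball p r. \<forall>y'\<in>cball p r. \<bar>g2 y - g2 y'\<bar> \<le> \<Lambda>2 * norm (y - y')"
      using lip_cball[of U g2 "P [True, False]" "P [False, False]" p r] Pd Pc sub by (auto simp: g2_def)
    have "\<bar>g1 y - g1 y'\<bar> \<le> max \<Lambda>1 \<Lambda>2 * norm (y - y') \<and> \<bar>g2 y - g2 y'\<bar> \<le> max \<Lambda>1 \<Lambda>2 * norm (y - y')"
      if "y \<in> cball p r" "y' \<in> cball p r" for y y'
    proof -
      have "\<Lambda>1 * norm (y - y') \<le> max \<Lambda>1 \<Lambda>2 * norm (y - y')" "\<Lambda>2 * norm (y - y') \<le> max \<Lambda>1 \<Lambda>2 * norm (y - y')"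
        by (intro mult_right_mono; simp)+
      then show ?thesis using l1(2) l2(2) that by (meson order_trans)
    qed
    then show ?thesis using l1(1) by (intro exI[of _ "max \<Lambda>1 \<Lambda>2"]) auto
  qed
  have c1: "continuous_on U g1" "continuous_on U g2" using Pc by (simp_all add: g1_def g2_def)
  show ?thesis by (rule that[OF U(1,2,4) fd lk(1) lk(2) c1 lip])
qed


lemma tang_shift_gen:
  assumes gper: "\<forall>t. g (t + 1) = g t + A" and gd: "\<And>t. (g has_vector_derivative D1 t) (at t)"
    and AZ: "A \<in> Z2" and Lper: "\<forall>x. \<forall>k\<in>Z2. L (x + k) = L x"
  shows "(D1 (s + of_int k) \<in> L (g (s + of_int k))) \<longleftrightarrow> (D1 s \<in> L (g s))"
  using shift_int[OF gper, of s k] deriv_shift[OF gper gd, of s k] Lper Z2_int_scale[OF AZ, of k] by simp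

lemma eps_helper:
  fixes a r e :: real
  assumes "0 \<le> a" "0 < r" "0 \<le> e" "e \<le> r / (a + 1)"
  shows "e * a < r"
proof -
  have "e * a \<le> r / (a + 1) * a" using assms by (intro mult_right_mono) auto
  also have "r / (a + 1) * a < r" using assms by (simp add: field_simps)
  finally show ?thesis .
qed

theorem mainTheorem10:
  fixes L :: "real^2 \<Rightarrow> (real^2) set" and A :: "real^2" and \<gamma> :: "real \<Rightarrow> real^2"
  assumes "foliation_T2 L"
    and "A \<in> Z2"
    and "\<not> closed_leaf_class L A"
    and "minimal_contact_curve L A \<gamma>"
  shows "\<forall>t0. vector_derivative \<gamma> (at t0) \<in> L (\<gamma> t0) \<longrightarrow> \<not> leaf_crosses L \<gamma> t0"
proof (intro allI impI notI)
  fix t0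
  assume tg: "vector_derivative \<gamma> (at t0) \<in> L (\<gamma> t0)" and cr: "leaf_crosses L \<gamma> t0"
  have AZ: "A \<in> Z2" by fact
  have Lper: "\<forall>x. \<forall>k\<in>Z2. L (x + k) = L x" using assms(1) unfolding foliation_T2_def by blast
  have emb: "embedded_loop A \<gamma>" and fin: "finite (tangencies L \<gamma>)"
    and minim: "\<And>g'. embedded_loop A g' \<Longrightarrow> finite (tangencies L g') \<Longrightarrow> card (tangencies L \<gamma>) \<le> card (tangencies L g')"
    using assms(4) unfolding minimal_contact_curve_def by auto
  obtain D where D0: "D 0 = \<gamma>" and Dd: "\<And>n t. (D n has_vector_derivative D (Suc n) t) (at t)"
    using emb unfolding embedded_loop_def smooth_curve_def by blast
  have gper: "\<forall>t. \<gamma> (t + 1) = \<gamma> t + A" using emb unfolding embedded_loop_def by blast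
  have gd: "\<And>t. (\<gamma> has_vector_derivative D 1 t) (at t)" using Dd[of 0] D0 by simp
  have vd: "\<And>t. vector_derivative \<gamma> (at t) = D 1 t" using gd by (simp add: vector_derivative_at)
  have tg0: "D 1 t0 \<in> L (\<gamma> t0)" using tg vd by simp
  have cg: "continuous_on UNIV \<gamma>"
    using gd by (meson continuous_at_imp_continuous_on has_vector_derivative_continuous)
  have cD1: "continuous_on UNIV (D 1)"
    using Dd[of 1] by (meson continuous_at_imp_continuous_on has_vector_derivative_continuous)
  define p where "p = \<gamma> t0"
  obtain U f where lfi: "local_first_integral L p U f"
    and crs: "\<forall>\<delta>>0. \<exists>s1\<in>ball t0 \<delta>. \<exists>s2\<in>ball t0 \<delta>. \<gamma> s1 \<in> U \<and> \<gamma> s2 \<in> U \<and> f (\<gamma> s1) < 0 \<and> 0 < f (\<gamma> s2)"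
    using cr unfolding leaf_crosses_def p_def by blast
  obtain g1 g2 where U: "open U" "p \<in> U" "f p = 0"
    and fd: "\<And>y. y\<in>U \<Longrightarrow> (f has_derivative (\<lambda>h. h$1 * g1 y + h$2 * g2 y)) (at y)"
    and lk: "\<And>y v. y\<in>U \<Longrightarrow> v \<in> L y \<longleftrightarrow> v$1 * g1 y + v$2 * g2 y = 0"
    and gnz: "\<And>y. y\<in>U \<Longrightarrow> g1 y \<noteq> 0 \<or> g2 y \<noteq> 0"
    and cg1: "continuous_on U g1" and cg2: "continuous_on U g2"
    and lipex: "\<And>r. cball p r \<subseteq> U \<Longrightarrow> \<exists>\<Lambda>\<ge>0. \<forall>y\<in>cball p r. \<forall>y'\<in>cball p r.
        \<bar>g1 y - g1 y'\<bar> \<le> \<Lambda> * norm (y - y') \<and> \<bar>g2 y - g2 y'\<bar> \<le> \<Lambda> * norm (y - y')"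
    by (rule lfi_analysis[OF lfi], rule that, assumption+)
  obtain \<rho>0 where r0: "\<rho>0 > 0" "cball p \<rho>0 \<subseteq> U" using U(1,2) open_contains_cball by blast
  define w0 :: "real^2" where "w0 = vector [g1 p, g2 p]"
  define hf where "hf y = w0$1 * g1 y + w0$2 * g2 y" for y
  have w0nz: "w0 \<noteq> 0"
  proof
    assume "w0 = 0"
    then have "w0$1 = 0" "w0$2 = 0" by auto
    then show False using gnz[OF U(2)] by (simp add: w0_def)
  qed
  have hfp: "hf p = norm w0 ^ 2"
  proof -
    have "norm w0 ^ 2 = inner w0 w0" by (simp add: power2_norm_eq_inner)
    also have "\<dots> = w0$1 * w0$1 + w0$2 * w0$2" by (simp add: inner_vec_def sum_2)
    finally show ?thesis by (simp add: hf_def w0_def)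
  qed
  have nw0: "0 < norm w0" using w0nz by simp
  have chf: "continuous_on U hf" unfolding hf_def using cg1 cg2 by (intro continuous_intros)
  obtain \<rho>1 where r1: "\<rho>1 > 0" "\<forall>y\<in>U. dist y p < \<rho>1 \<longrightarrow> dist (hf y) (hf p) < norm w0 ^ 2 / 2"
  proof -
    have "norm w0 ^ 2 / 2 > 0" using nw0 by simp
    then show ?thesis using chf U(2) unfolding continuous_on_iff using that by blast
  qed
  define \<rho> where "\<rho> = min (min (\<rho>0/2) (\<rho>1/2)) (1/4)"
  have rho: "0 < \<rho>" "\<rho> \<le> 1/4" "cball p \<rho> \<subseteq> U"
    using r0 r1 by (auto simp: \<rho>_def)
  have hfpos: "norm w0 ^ 2 / 2 \<le> hf y" if "y \<in> cball p \<rho>" for y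
  proof -
    have "y \<in> U" "dist y p < \<rho>1" using that rho r1 by (auto simp: \<rho>_def dist_commute)
    then have "dist (hf y) (hf p) < norm w0 ^ 2 / 2" using r1 by blast
    then have "\<bar>hf y - hf p\<bar> < norm w0 ^ 2 / 2" by (simp add: dist_real_def)
    then show ?thesis using hfp by linarith
  qed
  obtain \<Lambda> where Lam: "\<Lambda> \<ge> 0" and Lip: "\<forall>y\<in>cball p \<rho>. \<forall>y'\<in>cball p \<rho>.
        \<bar>g1 y - g1 y'\<bar> \<le> \<Lambda> * norm (y - y') \<and> \<bar>g2 y - g2 y'\<bar> \<le> \<Lambda> * norm (y - y')"
    using lipex[OF rho(3)] by blast
  obtain \<Gamma>1 where G1: "\<forall>y\<in>cball p \<rho>. \<bar>g1 y\<bar> \<le> \<Gamma>1" using bnd_cball[OF cg1 rho(3)] by blast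
  obtain \<Gamma>2 where G2: "\<forall>y\<in>cball p \<rho>. \<bar>g2 y\<bar> \<le> \<Gamma>2" using bnd_cball[OF cg2 rho(3)] by blast
  define \<Gamma> where "\<Gamma> = max \<Gamma>1 \<Gamma>2"
  have Gam: "\<bar>g1 y\<bar> \<le> \<Gamma> \<and> \<bar>g2 y\<bar> \<le> \<Gamma>" if "y \<in> cball p \<rho>" for y
    using G1 G2 that by (force simp: \<Gamma>_def)
  have Gam0: "0 \<le> \<Gamma>" using Gam[of p] rho by auto
  define S where "S = {s \<in> {t0 - 1/4 .. t0 + 1/4}. D 1 s \<in> L (\<gamma> s)}"
  have finS: "finite S"
  proof -
    have "frac ` S \<subseteq> tangencies L \<gamma>"
    proof
      fix x assume "x \<in> frac ` S"
      then obtain s where s: "s \<in> S" "x = frac s" by blast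
      have "frac s = s + of_int (- \<lfloor>s\<rfloor>)" by (simp add: frac_def)
      then have "D 1 (frac s) \<in> L (\<gamma> (frac s))"
        using tang_shift_gen[OF gper gd AZ Lper, of s "- \<lfloor>s\<rfloor>"] s(1) by (simp add: S_def)
      then show "x \<in> tangencies L \<gamma>" using s frac_ge_0 frac_lt_1 by (simp add: tangencies_def vd)
    qed
    then have "finite (frac ` S)" using fin finite_subset by blast
    moreover have "inj_on frac S"
    proof
      fix a b assume ab: "a \<in> S" "b \<in> S" "frac a = frac b"
      then have "a - b = of_int (\<lfloor>a\<rfloor> - \<lfloor>b\<rfloor>)" by (simp add: frac_def algebra_simps)
      then have "a - b \<in> \<int>" by simp
      then obtain n where n: "a - b = of_int n" by (auto elim: Ints_cases)
      have "\<bar>a - b\<bar> \<le> 1/2" using ab unfolding S_def abs_le_iff by auto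
      then have "of_int \<bar>n\<bar> < (1::real)" using n by simp
      then have "\<bar>n\<bar> < 1" by (simp only: of_int_less_1_iff)
      then have "n = 0" by simp
      then show "a = b" using n by simp
    qed
    ultimately show ?thesis using finite_imageD by blast
  qed
  obtain d0 where d0: "d0 > 0" "\<forall>x\<in>S. x \<noteq> t0 \<longrightarrow> d0 \<le> dist t0 x" using finite_set_avoid[OF finS] by blast
  obtain d1 where d1: "d1 > 0" "\<forall>s. dist s t0 < d1 \<longrightarrow> dist (\<gamma> s) (\<gamma> t0) < \<rho>/2"
  proof -
    have "\<rho>/2 > 0" using rho by simp
    then show ?thesis using cg unfolding continuous_on_iff using that by blast
  qed
  define \<delta>s where "\<delta>s = min (min (d0/2) (d1/2)) (1/4)"
  have ds: "0 < \<delta>s" "\<delta>s \<le> 1/4" using d0 d1 by (auto simp: \<delta>s_def)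
  have near: "\<gamma> s \<in> cball p (\<rho>/2)" if "\<bar>s - t0\<bar> \<le> \<delta>s" for s
  proof -
    have "dist s t0 < d1" using that d1 by (auto simp: \<delta>s_def dist_real_def)
    then show ?thesis using d1 by (auto simp: p_def dist_commute less_imp_le)
  qed
  have nearU: "\<gamma> s \<in> U" if "\<bar>s - t0\<bar> \<le> \<delta>s" for s
    using near[OF that] rho by auto
  have notang: "D 1 s \<notin> L (\<gamma> s)" if "\<bar>s - t0\<bar> \<le> \<delta>s" "s \<noteq> t0" for s
  proof
    assume "D 1 s \<in> L (\<gamma> s)"
    then have "s \<in> S" using that ds by (auto simp: S_def)
    then have "d0 \<le> dist t0 s" using d0 that by blast
    moreover have "dist t0 s < d0"
    proof -
      have "\<bar>s - t0\<bar> * 2 \<le> d0" "0 < \<bar>s - t0\<bar>" using that by (auto simp: \<delta>s_def)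
      then have "\<bar>s - t0\<bar> < d0" by (smt (verit))
      then show ?thesis by (simp add: dist_real_def abs_minus_commute)
    qed
    ultimately show False by simp
  qed
  define \<phi>' where "\<phi>' s = dG g1 g2 (\<gamma> s) (D 1 s)" for s
  have phider: "((\<lambda>s. f (\<gamma> s)) has_real_derivative \<phi>' s) (at s)" if "\<bar>s - t0\<bar> \<le> \<delta>s" for s
  proof -
    have g: "(\<gamma> has_derivative (\<lambda>x. x *\<^sub>R D 1 s)) (at s)"
      using gd[of s] unfolding has_vector_derivative_def by simp
    have "((\<lambda>s. f (\<gamma> s)) has_derivative (\<lambda>x. (x *\<^sub>R D 1 s)$1 * g1 (\<gamma> s) + (x *\<^sub>R D 1 s)$2 * g2 (\<gamma> s))) (at s)"
      using has_derivative_compose[OF g fd[OF nearU[OF that]]] by simp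
    moreover have "(\<lambda>x. (x *\<^sub>R D 1 s)$1 * g1 (\<gamma> s) + (x *\<^sub>R D 1 s)$2 * g2 (\<gamma> s)) = (*) (\<phi>' s)"
      by (auto simp: fun_eq_iff dG_def \<phi>'_def algebra_simps)
    ultimately show ?thesis by (simp add: has_field_derivative_def)
  qed
  have Isub: "\<gamma> ` {t0 - \<delta>s..t0 + \<delta>s} \<subseteq> U" using nearU by (auto simp: abs_le_iff)
  have cphi: "continuous_on {t0 - \<delta>s..t0 + \<delta>s} \<phi>'"
  proof -
    have c1: "continuous_on {t0 - \<delta>s..t0 + \<delta>s} (\<lambda>s. g1 (\<gamma> s))"
      by (rule continuous_on_compose2[OF cg1 continuous_on_subset[OF cg] Isub]) auto
    have c2: "continuous_on {t0 - \<delta>s..t0 + \<delta>s} (\<lambda>s. g2 (\<gamma> s))"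
      by (rule continuous_on_compose2[OF cg2 continuous_on_subset[OF cg] Isub]) auto
    have c3: "continuous_on {t0 - \<delta>s..t0 + \<delta>s} (D 1)" by (rule continuous_on_subset[OF cD1]) auto
    show ?thesis unfolding \<phi>'_def dG_def using c1 c2 c3 by (intro continuous_intros)
  qed
  have phinz: "\<phi>' s \<noteq> 0" if "\<bar>s - t0\<bar> \<le> \<delta>s" "s \<noteq> t0" for s
    using notang[OF that] lk[OF nearU[OF that(1)]] by (simp add: \<phi>'_def dG_def)
  have cr12: "\<exists>s1. \<bar>s1 - t0\<bar> < \<delta>s \<and> f (\<gamma> s1) < 0" "\<exists>s2. \<bar>s2 - t0\<bar> < \<delta>s \<and> 0 < f (\<gamma> s2)"
    using crs ds(1) by (force simp: dist_real_def abs_minus_commute)+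
  obtain \<sigma> :: real where sig: "\<sigma> = 1 \<or> \<sigma> = -1" and sgpos: "\<And>s. \<bar>s - t0\<bar> \<le> \<delta>s \<Longrightarrow> s \<noteq> t0 \<Longrightarrow> 0 < \<sigma> * \<phi>' s"
    using cross_sign[OF ds(1) phider cphi phinz] U(3) cr12 by (auto simp: p_def)
  have sig2: "\<sigma> * \<sigma> = 1" "\<bar>\<sigma>\<bar> = 1" "\<sigma> \<noteq> 0" using sig by auto
  define g1s where "g1s y = \<sigma> * g1 y" for y
  define g2s where "g2s y = \<sigma> * g2 y" for y
  define Fs where "Fs y = \<sigma> * f y" for y
  define w where "w = \<sigma> *\<^sub>R w0"
  have nww: "norm w = norm w0" using sig2 by (simp add: w_def)
  have wnz: "w \<noteq> 0" using w0nz sig2 by (simp add: w_def)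
  obtain M where Mb: "\<And>s. \<bar>s - t0\<bar> \<le> \<delta>s \<Longrightarrow> norm (D 1 s) \<le> M"
  proof -
    have "compact (D 1 ` {t0 - \<delta>s..t0 + \<delta>s})"
      by (intro compact_continuous_image continuous_on_subset[OF cD1]) auto
    then obtain K where "\<forall>z\<in>D 1 ` {t0 - \<delta>s..t0 + \<delta>s}. norm z \<le> K" using compact_imp_bounded bounded_iff by metis
    then show ?thesis using that by (force simp: abs_le_iff)
  qed
  define J where "J = {t0 + (\<delta>s/2)/2 .. t0 + \<delta>s/2}"
  have cJ: "continuous_on J (\<lambda>s. \<sigma> * \<phi>' s)"
    by (intro continuous_intros continuous_on_subset[OF cphi]) (use ds in \<open>auto simp: J_def\<close>)
  obtain s0 where s0: "s0 \<in> J" "\<forall>s\<in>J. \<sigma> * \<phi>' s0 \<le> \<sigma> * \<phi>' s"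
    using continuous_attains_inf[OF compact_Icc _ cJ[unfolded J_def]] ds by (auto simp: J_def)
  define c where "c = \<sigma> * \<phi>' s0"
  have cpos: "0 < c" using sgpos[of s0] s0(1) ds by (auto simp: J_def c_def)
  have phis: "D 1 s $1 * g1s (\<gamma> s) + D 1 s $2 * g2s (\<gamma> s) = \<sigma> * \<phi>' s" for s
    by (simp add: g1s_def g2s_def \<phi>'_def dG_def algebra_simps)
  have cbound: "c \<le> D 1 s $1 * g1s (\<gamma> s) + D 1 s $2 * g2s (\<gamma> s)"
    if "t0 + (\<delta>s/2)/2 \<le> s" "s \<le> t0 + \<delta>s/2" for s
  proof -
    have "s \<in> J" using that by (simp add: J_def)
    then show ?thesis using s0(2) phis[of s] by (simp add: c_def)
  qed
  have "0 < \<delta>s/2" using ds by simp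
  from bump_exists[OF this, of "4*\<Lambda>*M/norm w + 1"] obtain Db where DbA:
    "(\<forall>n t. (Db n has_real_derivative Db (Suc n) t) (at t)) \<and>
     (\<forall>n x. \<delta>s/2 < \<bar>x\<bar> \<longrightarrow> Db n x = 0) \<and> (\<forall>x. 0 \<le> Db 0 x) \<and>
     (\<forall>x. \<delta>s/2 \<le> \<bar>x\<bar> \<longrightarrow> Db 0 x = 0 \<and> Db 1 x = 0) \<and>
     (\<forall>x. -(\<delta>s/2) < x \<and> x \<le> (\<delta>s/2)/2 \<longrightarrow> 0 < Db 0 x \<and> (4*\<Lambda>*M/norm w + 1) * Db 0 x \<le> Db 1 x) \<and>
     (\<exists>B. \<forall>x. \<bar>Db 0 x\<bar> \<le> B \<and> \<bar>Db 1 x\<bar> \<le> B)" by blast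
  have Dbd: "\<And>n t. (Db n has_real_derivative Db (Suc n) t) (at t)" using DbA by blast
  have Dbvan: "\<forall>n x. \<delta>s/2 < \<bar>x\<bar> \<longrightarrow> Db n x = 0" using DbA by blast
  have Dbnn: "\<And>x. 0 \<le> Db 0 x" using DbA by blast
  have Dbz: "\<And>x. \<delta>s/2 \<le> \<bar>x\<bar> \<Longrightarrow> Db 0 x = 0 \<and> Db 1 x = 0" using DbA by blast
  have Dbpos: "\<And>x. -(\<delta>s/2) < x \<Longrightarrow> x \<le> (\<delta>s/2)/2 \<Longrightarrow> 0 < Db 0 x \<and> (4*\<Lambda>*M/norm w + 1) * Db 0 x \<le> Db 1 x"
    using DbA by blast
  have DbBex: "\<exists>B. \<forall>x. \<bar>Db 0 x\<bar> \<le> B \<and> \<bar>Db 1 x\<bar> \<le> B" using DbA by blast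
  obtain B where DbB: "\<And>x. \<bar>Db 0 x\<bar> \<le> B \<and> \<bar>Db 1 x\<bar> \<le> B" using DbBex by blast
  have B0: "0 \<le> B" using DbB[of 0] by linarith
  have M0: "0 \<le> M"
  proof -
    have "norm (D 1 t0) \<le> M" using Mb[of t0] ds by simp
    then show ?thesis using norm_ge_zero[of "D 1 t0"] by linarith
  qed
  define SS where "SS = {t0 - \<delta>s/2 .. t0 + \<delta>s/2} \<times> ({\<delta>s/2 .. 1/2} \<union> {-1/2 .. -(\<delta>s/2)})"
  define q where "q z = infdist (\<gamma> (fst z) - \<gamma> (fst z - snd z)) Z2" for z :: "real \<times> real"
  have cSS: "compact SS" unfolding SS_def by (intro compact_Times compact_Un compact_Icc)
  have neSS: "SS \<noteq> {}" using ds by (auto simp: SS_def intro!: exI[of _ t0] exI[of _ "1/2"])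
  have cq: "continuous_on SS q" unfolding q_def
    by (intro continuous_on_infdist continuous_intros continuous_on_compose2[OF cg]) auto
  obtain z0 where z0: "z0 \<in> SS" "\<forall>z\<in>SS. q z0 \<le> q z" using continuous_attains_inf[OF cSS neSS cq] by blast
  define m where "m = q z0"
  have qpos: "0 < q z" if "z \<in> SS" for z
  proof -
    obtain s d where z: "z = (s, d)" by (cases z)
    have d: "\<delta>s/2 \<le> \<bar>d\<bar>" "\<bar>d\<bar> \<le> 1/2" using that ds by (auto simp: SS_def z)
    have "\<gamma> s - \<gamma> (s - d) \<notin> Z2"
    proof
      assume "\<gamma> s - \<gamma> (s - d) \<in> Z2"
      then have "s - (s - d) \<in> \<int>" using emb unfolding embedded_loop_def by blast
      then obtain n where "d = of_int n" by (auto elim: Ints_cases)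
      then have "of_int \<bar>n\<bar> < (1::real)" "0 < \<bar>n\<bar>" using d ds by auto
      then show False by (simp only: of_int_less_1_iff)
    qed
    then show ?thesis unfolding q_def z
      using infdist_pos_not_in_closed[OF closed_Z2] zero_Z2 by auto
  qed
  have mpos: "0 < m" using qpos z0(1) by (simp add: m_def)
  have mbound: "m \<le> infdist (\<gamma> s - \<gamma> (s - d)) Z2"
    if "\<bar>s - t0\<bar> \<le> \<delta>s/2" "\<delta>s/2 \<le> \<bar>d\<bar>" "\<bar>d\<bar> \<le> 1/2" for s d
  proof -
    have "(s, d) \<in> SS" using that unfolding SS_def abs_le_iff by auto
    then have "q z0 \<le> q (s, d)" using z0(2) by blast
    then show ?thesis by (simp add: m_def q_def)
  qed
  define nw where "nw = norm w"
  define X where "X = 2*\<Lambda>*B*M*nw + B*2*\<Gamma>*nw"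
  have nw0': "0 < nw" using wnz by (simp add: nw_def)
  have X0: "0 \<le> X" using Lam B0 M0 Gam0 nw0' by (simp add: X_def)
  define \<epsilon> where "\<epsilon> = min (min ((\<rho>/2)/(B*nw+1)) (c/(X+1))) (m/(2*B*nw+1))"
  have BN: "0 \<le> B * nw" using B0 nw0' by simp
  have epos: "0 < \<epsilon>"
  proof -
    have "0 < (\<rho>/2)/(B*nw+1)" using rho BN by (intro divide_pos_pos) auto
    moreover have "0 < c/(X+1)" using cpos X0 by (intro divide_pos_pos) auto
    moreover have "0 < m/(2*B*nw+1)" using mpos BN by (intro divide_pos_pos) auto
    ultimately show ?thesis by (simp add: \<epsilon>_def)
  qed
  have e1: "\<epsilon> * B * norm w \<le> \<rho>/2"
  proof -
    have "\<epsilon> * (B * nw) < \<rho>/2" using B0 nw0' rho epos by (intro eps_helper) (auto simp: \<epsilon>_def)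
    then show ?thesis by (simp add: nw_def mult.assoc)
  qed
  have e2: "\<epsilon> * (2*\<Lambda>*B*M*norm w + B*2*\<Gamma>*norm w) < c"
    using eps_helper[of X c \<epsilon>] X0 cpos epos by (auto simp: \<epsilon>_def X_def nw_def)
  have e3: "\<epsilon> * 2 * B * norm w < m"
  proof -
    have "\<epsilon> * (2 * B * nw) < m" using B0 nw0' mpos epos by (intro eps_helper) (auto simp: \<epsilon>_def)
    then show ?thesis by (simp add: nw_def mult.assoc)
  qed
  have rho': "cball (\<gamma> t0) \<rho> \<subseteq> U" using rho by (simp add: p_def)
  have Fd: "\<And>y. y\<in>U \<Longrightarrow> (Fs has_derivative (\<lambda>h. h$1 * g1s y + h$2 * g2s y)) (at y)"
  proof -
    fix y assume "y \<in> U"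
    then have "((\<lambda>y. \<sigma> * f y) has_derivative (\<lambda>h. \<sigma> * (h$1 * g1 y + h$2 * g2 y))) (at y)"
      using fd by (intro has_derivative_mult_right) auto
    moreover have "(\<lambda>h::real^2. \<sigma> * (h$1 * g1 y + h$2 * g2 y)) = (\<lambda>h. h$1 * g1s y + h$2 * g2s y)"
      by (auto simp: fun_eq_iff g1s_def g2s_def algebra_simps)
    ultimately show "(Fs has_derivative (\<lambda>h. h$1 * g1s y + h$2 * g2s y)) (at y)" by (simp add: Fs_def[abs_def])
  qed
  have Lker: "\<And>y v. y\<in>U \<Longrightarrow> v \<in> L y \<longleftrightarrow> v$1 * g1s y + v$2 * g2s y = 0"
  proof -
    fix y and v :: "real^2" assume "y \<in> U"
    have "v$1 * g1s y + v$2 * g2s y = \<sigma> * (v$1 * g1 y + v$2 * g2 y)" by (simp add: g1s_def g2s_def algebra_simps)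
    then show "v \<in> L y \<longleftrightarrow> v$1 * g1s y + v$2 * g2s y = 0" using lk[OF \<open>y \<in> U\<close>] sig2 by simp
  qed
  have Lip': "\<And>y y'. y\<in>cball (\<gamma> t0) \<rho> \<Longrightarrow> y'\<in>cball (\<gamma> t0) \<rho> \<Longrightarrow>
        \<bar>g1s y - g1s y'\<bar> \<le> \<Lambda> * norm (y - y') \<and> \<bar>g2s y - g2s y'\<bar> \<le> \<Lambda> * norm (y - y')"
  proof -
    fix y y' assume "y\<in>cball (\<gamma> t0) \<rho>" "y'\<in>cball (\<gamma> t0) \<rho>"
    moreover have "\<bar>g1s y - g1s y'\<bar> = \<bar>g1 y - g1 y'\<bar>" "\<bar>g2s y - g2s y'\<bar> = \<bar>g2 y - g2 y'\<bar>"
      using sig2 by (simp_all add: g1s_def g2s_def right_diff_distrib[symmetric] abs_mult)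
    ultimately show "\<bar>g1s y - g1s y'\<bar> \<le> \<Lambda> * norm (y - y') \<and> \<bar>g2s y - g2s y'\<bar> \<le> \<Lambda> * norm (y - y')"
      using Lip by (simp add: p_def)
  qed
  have Gam': "\<And>y. y\<in>cball (\<gamma> t0) \<rho> \<Longrightarrow> \<bar>g1s y\<bar> \<le> \<Gamma> \<and> \<bar>g2s y\<bar> \<le> \<Gamma>"
    using Gam sig2 by (simp add: g1s_def g2s_def abs_mult p_def)
  have wpos: "\<And>y. y\<in>cball (\<gamma> t0) \<rho> \<Longrightarrow> norm w ^ 2 / 2 \<le> w$1 * g1s y + w$2 * g2s y"
  proof -
    fix y assume "y\<in>cball (\<gamma> t0) \<rho>"
    then have "norm w0 ^ 2 / 2 \<le> hf y" using hfpos by (simp add: p_def)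
    moreover have "w$1 * g1s y + w$2 * g2s y = (\<sigma> * \<sigma>) * hf y"
      by (simp add: w_def g1s_def g2s_def hf_def algebra_simps)
    ultimately show "norm w ^ 2 / 2 \<le> w$1 * g1s y + w$2 * g2s y" using sig2 nww by simp
  qed
  have near': "\<And>s. \<bar>s - t0\<bar> \<le> \<delta>s \<Longrightarrow> \<gamma> s \<in> cball (\<gamma> t0) (\<rho>/2)" using near by (simp add: p_def)
  have pos': "\<And>s. \<bar>s - t0\<bar> \<le> \<delta>s \<Longrightarrow> s \<noteq> t0 \<Longrightarrow> 0 < D 1 s $1 * g1s (\<gamma> s) + D 1 s $2 * g2s (\<gamma> s)"
    using sgpos phis by metis
  interpret P: pert L A \<gamma> D t0 \<delta>s \<rho> U g1s g2s Fs \<Lambda> \<Gamma> M w Db B c m \<epsilon>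
    by unfold_locales (fact emb AZ Lper D0 Dd ds rho rho' U Fd Lker Lip' Lam Gam' wnz wpos near' pos' Mb tg0
       Dbd Dbvan Dbnn Dbz Dbpos DbB cpos cbound mpos mbound epos e1 e2 e3)+
  obtain g where g: "embedded_loop A g" "tangencies L g = tangencies L \<gamma> - {frac t0}"
    using P.result by blast
  have ft: "frac t0 \<in> tangencies L \<gamma>"
  proof -
    have "frac t0 = t0 + of_int (- \<lfloor>t0\<rfloor>)" by (simp add: frac_def)
    then have "D 1 (frac t0) \<in> L (\<gamma> (frac t0))"
      using tang_shift_gen[OF gper gd AZ Lper, of t0 "- \<lfloor>t0\<rfloor>"] tg0 by simp
    then show ?thesis using frac_ge_0 frac_lt_1 by (simp add: tangencies_def vd)
  qed
  have "finite (tangencies L g)" using fin g(2) by simp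
  then have "card (tangencies L \<gamma>) \<le> card (tangencies L g)" using minim g(1) by blast
  moreover have "card (tangencies L g) < card (tangencies L \<gamma>)"
    using g(2) card_Diff1_less[OF fin ft] by simp
  ultimately show False by simp
qed


end
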